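(* For every $\varepsilon,\delta\in(0,1)$ and $n,r\in\mathbb{N}$, define \[ \varepsilon_0=\frac{\varepsilon}{\sqrt{8r\log(2/\delta)}},\qquad\delta_0=\frac{\delta}{2r},\qquad\lambda^*=\lambda^*(n,\varepsilon_0,\delta_0). \] Then for every $\lambda\ge\lambda^*$, the real-sum protocol $P^{\mathbb{R}}_{n,\lambda,r}$ is $(\varepsilon,\delta)$-differentially private in the shuffled model.
   Context: Differential privacy: an algorithm $M$ on datasets is $(\varepsilon,\delta)$-differentially private if for all datasets $X,X'$ differing in one user's entry and every output set $T$, $\Pr[M(X)\in T]\le e^\varepsilon\Pr[M(X')\in T]+\delta$; a shuffled protocol is $(\varepsilon,\delta)$-differentially private if the map from users' data to the uniformly randomly permuted multiset of all messages is. Bit randomizer $R^{0/1}_{n,\lambda}(b)$, $b\in\{0,1\}$: draw $\mathbf{b}\sim\mathrm{Ber}(\lambda/n)$; output $b$ if $\mathbf{b}=0$, a fresh $\mathrm{Ber}(1/2)$ bit if $\mathbf{b}=1$. The bit-sum protocol with $n$ users has each user send $R^{0/1}_{n,\lambda}(x_i)$ for $x_i\in\{0,1\}$. $\lambda^*(n,\varepsilon,\delta)$ is the minimum value of $\lambda$ such that the bit-sum protocol with $n$ users is $(\varepsilon,\delta)$-differentially private in the shuffled model. Encoder $E_r(x)$, $x\in[0,1]$: $\mu=\lceil xr\rceil$, $p=xr-\mu+1$, and $b_j=1$ for $j<\mu$, $b_j\sim\mathrm{Ber}(p)$ for $j=\mu$, $b_j=0$ for $j>\mu$ ($j=1,\dots,r$).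 Real-sum protocol $P^{\mathbb{R}}_{n,\lambda,r}$: user $i$ computes $(b_{i,1},\dots,b_{i,r})=E_r(x_i)$ and sends the $r$ messages $R^{0/1}_{n,\lambda}(b_{i,j})$ (independent randomness); all $nr$ messages are shuffled; the analyzer outputs $\frac1r\cdot\frac{n}{n-\lambda}(\sum_{i,j}y_{i,j}-\frac{\lambda r}{2})$. $\log$ is the natural logarithm. *)

theory Defs
  imports "HOL-Probability.Probability"
begin

fun list_pmf :: "'a pmf list \<Rightarrow> 'a list pmf" where
  "list_pmf [] = return_pmf []"
| "list_pmf (p # ps) = bind_pmf p (\<lambda>x. bind_pmf (list_pmf ps) (\<lambda>xs. return_pmf (x # xs)))"

definition dp :: "real \<Rightarrow> real \<Rightarrow> nat \<Rightarrow> 'a set \<Rightarrow> ('a list \<Rightarrow> 'b pmf) \<Rightarrow> bool" where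
  "dp eps del n D M \<longleftrightarrow>
     (\<forall>X X'. length X = n \<longrightarrow> length X' = n \<longrightarrow> set X \<subseteq> D \<longrightarrow> set X' \<subseteq> D \<longrightarrow>
        card {i. i < n \<and> X ! i \<noteq> X' ! i} \<le> 1 \<longrightarrow>
        (\<forall>T. measure_pmf.prob (M X) T \<le> exp eps * measure_pmf.prob (M X') T + del))"

text \<open>Bit randomizer R^{0/1}_{n,lambda} (bits: True = 1, False = 0).\<close>
definition bit_rand :: "nat \<Rightarrow> real \<Rightarrow> bool \<Rightarrow> bool pmf" where
  "bit_rand n lam b = bind_pmf (bernoulli_pmf (lam / real n))
      (\<lambda>c. if c then bernoulli_pmf (1/2) else return_pmf b)"

text \<open>Shuffled output of the bit-sum protocol: the multiset of all messages.\<close>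
definition bitsum_shuffled :: "nat \<Rightarrow> real \<Rightarrow> bool list \<Rightarrow> bool multiset pmf" where
  "bitsum_shuffled n lam X = map_pmf mset (list_pmf (map (bit_rand n lam) X))"

definition lambda_star :: "nat \<Rightarrow> real \<Rightarrow> real \<Rightarrow> real" where
  "lambda_star n eps del =
     Inf {lam. 0 \<le> lam \<and> lam \<le> real n \<and> dp eps del n UNIV (bitsum_shuffled n lam)}"

definition encoder :: "nat \<Rightarrow> real \<Rightarrow> bool list pmf" where
  "encoder r x =
     (let mu = \<lceil>x * real r\<rceil>; p = x * real r - of_int mu + 1 in
      list_pmf (map (\<lambda>j. if int j < mu then return_pmf True
                          else if int j = mu then bernoulli_pmf p
                          else return_pmf False) [1..<r+1]))"

definition realsum_user :: "nat \<Rightarrow> real \<Rightarrow> nat \<Rightarrow> real \<Rightarrow> bool list pmf" where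
  "realsum_user n lam r x = bind_pmf (encoder r x) (\<lambda>bs. list_pmf (map (bit_rand n lam) bs))"

definition realsum_shuffled :: "nat \<Rightarrow> real \<Rightarrow> nat \<Rightarrow> real list \<Rightarrow> bool multiset pmf" where
  "realsum_shuffled n lam r X =
     map_pmf (\<lambda>ys. mset (concat ys)) (list_pmf (map (realsum_user n lam r) X))"

text \<open>Analyzer of P^R_{n,lambda,r} (post-processing; not needed for privacy).\<close>
definition realsum_analyzer :: "nat \<Rightarrow> real \<Rightarrow> nat \<Rightarrow> bool multiset \<Rightarrow> real" where
  "realsum_analyzer n lam r M =
     (1 / real r) * (real n / (real n - lam)) * (real (count M True) - lam * real r / 2)"

end

theory Submission
  imports Defs "HOL-Probability.Hoeffding"
begin

lemma list_pmf_Cons_map: "list_pmf (p # ps) = map_pmf (\<lambda>(x,xs). x # xs) (pair_pmf p (list_pmf ps))"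
  by (simp add: pair_pmf_def map_bind_pmf map_return_pmf)

definition lsets :: "'a set list \<Rightarrow> 'a list set" where
  "lsets Ss = {xs. list_all2 (\<lambda>x S. x \<in> S) xs Ss}"

lemma lsets_Nil[simp]: "lsets [] = {[]}"
  by (auto simp: lsets_def)

lemma lsets_Cons: "lsets (S # Ss) = (\<lambda>(x,xs). x # xs) ` (S \<times> lsets Ss)"
  by (auto simp: lsets_def list_all2_Cons2 image_iff)

lemma finite_lsets: "(\<And>S. S \<in> set Ss \<Longrightarrow> finite S) \<Longrightarrow> finite (lsets Ss)"
  by (induction Ss) (auto simp: lsets_Cons)

lemma set_list_pmf: "set_pmf (list_pmf ps) = lsets (map set_pmf ps)"
  by (induction ps) (auto simp: lsets_Cons list_pmf_Cons_map)

lemma length_in_set_list_pmf: "xs \<in> set_pmf (list_pmf ps) \<Longrightarrow> length xs = length ps"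
  by (auto simp: set_list_pmf lsets_def dest: list_all2_lengthD)

lemma nth_in_set_list_pmf: "xs \<in> set_pmf (list_pmf ps) \<Longrightarrow> i < length ps \<Longrightarrow> xs ! i \<in> set_pmf (ps ! i)"
  by (auto simp: set_list_pmf lsets_def list_all2_conv_all_nth)

fun prodl :: "('a \<Rightarrow> real) list \<Rightarrow> 'a list \<Rightarrow> real" where
  "prodl [] [] = 1"
| "prodl (f # fs) (x # xs) = f x * prodl fs xs"
| "prodl _ _ = 0"

lemma pmf_list_pmf: "pmf (list_pmf ps) xs = prodl (map pmf ps) xs"
proof (induction ps arbitrary: xs)
  case Nil
  then show ?case by (cases xs) (auto simp: pmf_return)
next
  case (Cons p ps)
  show ?case
  proof (cases xs)
    case Nil
    have "[] \<notin> set_pmf (list_pmf (p # ps))" by (auto dest: length_in_set_list_pmf)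
    then show ?thesis using Nil by (simp add: set_pmf_eq)
  next
    case (Cons y ys)
    have inj: "inj (\<lambda>(x::'a,xs). x # xs)" by (auto simp: inj_def)
    have "pmf (list_pmf (p # ps)) xs = pmf (map_pmf (\<lambda>(x,xs). x # xs) (pair_pmf p (list_pmf ps))) ((\<lambda>(x,xs). x # xs) (y, ys))"
      using Cons by (simp only: list_pmf_Cons_map) simp
    also have "\<dots> = pmf p y * pmf (list_pmf ps) ys"
      by (subst pmf_map_inj'[OF inj]) (simp add: pmf_pair)
    finally show ?thesis using Cons \<open>\<And>xs. pmf (list_pmf ps) xs = _\<close> by simp
  qed
qed

lemma list_pmf_bind:
  "list_pmf (map (\<lambda>i. bind_pmf (P i) (G i)) is) = bind_pmf (list_pmf (map P is)) (\<lambda>ws. list_pmf (map2 G is ws))"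
proof (induction "is")
  case Nil
  then show ?case by (simp add: bind_return_pmf)
next
  case (Cons i "is")
  show ?case
    apply (simp add: Cons bind_assoc_pmf bind_return_pmf)
    apply (subst bind_commute_pmf[of "G i _"])
    apply (simp add: bind_assoc_pmf bind_return_pmf)
    done
qed

lemma list_pmf_map_pmf: "list_pmf (map (map_pmf f) ps) = map_pmf (map f) (list_pmf ps)"
  by (induction ps) (simp_all add: map_bind_pmf bind_map_pmf map_return_pmf)

lemma list_pmf_return: "list_pmf (map return_pmf xs) = return_pmf xs"
  by (induction xs) (simp_all add: bind_return_pmf)

lemma list_pmf_zip:
  "length ps = length qs \<Longrightarrow>
   list_pmf (map2 pair_pmf ps qs) = map_pmf (\<lambda>(xs,ys). zip xs ys) (pair_pmf (list_pmf ps) (list_pmf qs))"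
proof (induction ps qs rule: list_induct2)
  case Nil
  then show ?case by (simp add: pair_return_pmf1 map_return_pmf)
next
  case (Cons p ps q qs)
  show ?case
    apply (simp only: list_pmf.simps list.map prod.case zip_Cons_Cons Cons.IH)
    apply (simp add: pair_pmf_def bind_assoc_pmf bind_return_pmf map_bind_pmf map_return_pmf)
    apply (subst bind_commute_pmf[of q])
    apply (simp add: bind_assoc_pmf bind_return_pmf)
    done
qed

lemma prob_bind_pmf:
  "measure_pmf.prob (bind_pmf p F) T = measure_pmf.expectation p (\<lambda>x. measure_pmf.prob (F x) T)"
proof -
  have int: "integrable (measure_pmf p) (\<lambda>x. measure_pmf.prob (F x) T)"
    by (rule measure_pmf.integrable_const_bound[where B=1]) auto
  have "ennreal (measure_pmf.prob (bind_pmf p F) T) = emeasure (measure_pmf (bind_pmf p F)) T"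
    by (simp add: measure_pmf.emeasure_eq_measure)
  also have "\<dots> = (\<integral>\<^sup>+x. emeasure (measure_pmf (F x)) T \<partial>measure_pmf p)"
    by (rule emeasure_bind_pmf)
  also have "\<dots> = (\<integral>\<^sup>+x. ennreal (measure_pmf.prob (F x) T) \<partial>measure_pmf p)"
    by (simp add: measure_pmf.emeasure_eq_measure)
  also have "\<dots> = ennreal (measure_pmf.expectation p (\<lambda>x. measure_pmf.prob (F x) T))"
    by (rule nn_integral_eq_integral[OF int]) auto
  finally show ?thesis
    by (subst (asm) ennreal_inj) (auto intro: Bochner_Integration.integral_nonneg)
qed

definition indist :: "real \<Rightarrow> real \<Rightarrow> 'a pmf \<Rightarrow> 'a pmf \<Rightarrow> bool" where
  "indist e d p q \<longleftrightarrow> (\<forall>T. measure_pmf.prob p T \<le> exp e * measure_pmf.prob q T + d)"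

lemma indist_map: "indist e d p q \<Longrightarrow> indist e d (map_pmf f p) (map_pmf f q)"
  by (simp add: indist_def)

lemma indist_mono_d: "indist e d p q \<Longrightarrow> d \<le> d' \<Longrightarrow> indist e d' p q"
  unfolding indist_def by (meson add_left_mono order_trans)

lemma indist_refl: "e \<ge> 0 \<Longrightarrow> d \<ge> 0 \<Longrightarrow> indist e d p p"
  unfolding indist_def
proof (intro allI)
  fix T assume "e \<ge> 0" "d \<ge> 0"
  have "1 \<le> exp e" using \<open>e \<ge> 0\<close> by simp
  from mult_right_mono[OF this, of "measure_pmf.prob p T"]
  have "measure_pmf.prob p T \<le> exp e * measure_pmf.prob p T" by simp
  then show "measure_pmf.prob p T \<le> exp e * measure_pmf.prob p T + d" using \<open>d \<ge> 0\<close> by linarith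
qed

lemma indist_bind_coupling:
  assumes "\<And>z. z \<in> set_pmf \<pi> \<Longrightarrow> indist e d (F (fst z)) (G (snd z))"
  shows "indist e d (bind_pmf (map_pmf fst \<pi>) F) (bind_pmf (map_pmf snd \<pi>) G)"
  unfolding indist_def
proof
  fix T
  have i1: "integrable (measure_pmf \<pi>) (\<lambda>z. measure_pmf.prob (F (fst z)) T)"
    by (rule measure_pmf.integrable_const_bound[where B=1]) auto
  have i2: "integrable (measure_pmf \<pi>) (\<lambda>z. exp e * measure_pmf.prob (G (snd z)) T + d)"
    by (rule measure_pmf.integrable_const_bound[where B="exp e + \<bar>d\<bar>"])
       (auto intro!: abs_triangle_ineq[THEN order_trans] add_mono mult_left_le)
  have "measure_pmf.prob (bind_pmf (map_pmf fst \<pi>) F) T = measure_pmf.expectation \<pi> (\<lambda>z. measure_pmf.prob (F (fst z)) T)"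
    by (simp add: bind_map_pmf prob_bind_pmf)
  also have "\<dots> \<le> measure_pmf.expectation \<pi> (\<lambda>z. exp e * measure_pmf.prob (G (snd z)) T + d)"
    using assms unfolding indist_def
    by (intro integral_mono_AE i1 i2) (auto simp: AE_measure_pmf_iff)
  also have "\<dots> = exp e * measure_pmf.expectation \<pi> (\<lambda>z. measure_pmf.prob (G (snd z)) T) + d"
    by (subst Bochner_Integration.integral_add)
       (auto intro!: measure_pmf.integrable_const_bound[where B="exp e"] measure_pmf.integrable_const_bound[where B=1] simp: measure_pmf.prob_space)
  also have "\<dots> = exp e * measure_pmf.prob (bind_pmf (map_pmf snd \<pi>) G) T + d"
    by (simp add: bind_map_pmf prob_bind_pmf)
  finally show "measure_pmf.prob (bind_pmf (map_pmf fst \<pi>) F) T \<le> exp e * measure_pmf.prob (bind_pmf (map_pmf snd \<pi>) G) T + d" .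
qed

lemma prob_as_sum:
  assumes "finite S" "set_pmf p \<subseteq> S"
  shows "measure_pmf.prob p T = (\<Sum>x\<in>S \<inter> T. pmf p x)"
proof -
  have "measure_pmf.prob p T = measure_pmf.prob p (T \<inter> set_pmf p)"
    by (simp add: measure_Int_set_pmf)
  also have "\<dots> = measure_pmf.prob p ((S \<inter> T) \<inter> set_pmf p)"
    using assms by (metis Int_absorb2 Int_assoc Int_commute)
  also have "\<dots> = (\<Sum>x\<in>S \<inter> T. pmf p x)"
    using assms by (simp add: measure_Int_set_pmf measure_measure_pmf_finite)
  finally show ?thesis .
qed

lemma mass_min_ge:
  fixes p q :: "'a pmf"
  assumes S: "finite S" "set_pmf p \<subseteq> S" "set_pmf q \<subseteq> S" and ind: "indist e d p q"
  shows "1 - d \<le> (\<Sum>x\<in>S. min (pmf p x) (exp e * pmf q x))"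
proof -
  define R where "R = {x\<in>S. pmf p x > exp e * pmf q x}"
  have "(\<Sum>x\<in>S. min (pmf p x) (exp e * pmf q x)) = (\<Sum>x\<in>S. pmf p x - (if pmf p x > exp e * pmf q x then pmf p x - exp e * pmf q x else 0))"
    by (intro sum.cong) auto
  also have "\<dots> = (\<Sum>x\<in>S. pmf p x) - (\<Sum>x\<in>S. (if pmf p x > exp e * pmf q x then pmf p x - exp e * pmf q x else 0))"
    by (simp add: sum_subtractf)
  also have "(\<Sum>x\<in>S. (if pmf p x > exp e * pmf q x then pmf p x - exp e * pmf q x else 0)) = (\<Sum>x\<in>R. pmf p x - exp e * pmf q x)"
    unfolding R_def using S by (simp add: sum.inter_filter)
  also have "(\<Sum>x\<in>S. pmf p x) = 1" using S by (simp add: sum_pmf_eq_1)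
  also have "(\<Sum>x\<in>R. pmf p x - exp e * pmf q x) = measure_pmf.prob p R - exp e * measure_pmf.prob q R"
    using S by (simp add: R_def sum_subtractf sum_distrib_left prob_as_sum Int_absorb1)
  finally have eq: "(\<Sum>x\<in>S. min (pmf p x) (exp e * pmf q x)) = 1 - (measure_pmf.prob p R - exp e * measure_pmf.prob q R)" .
  have "measure_pmf.prob p R - exp e * measure_pmf.prob q R \<le> d" using ind unfolding indist_def by (smt (verit))
  then show ?thesis using eq by simp
qed

lemma decomp_half:
  fixes p q :: "'a pmf"
  assumes S: "finite S" and e: "e \<ge> 0"
  defines "A0 \<equiv> \<lambda>x. min (pmf p x) (exp e * pmf q x)"
  defines "B0 \<equiv> \<lambda>x. min (pmf q x) (exp e * pmf p x)"
  assumes ge: "sum B0 S \<le> sum A0 S" and mB: "1 - d \<le> sum B0 S"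
  shows "\<exists>A B. (\<forall>x. 0 \<le> A x \<and> A x \<le> pmf p x) \<and> (\<forall>x. 0 \<le> B x \<and> B x \<le> pmf q x) \<and>
     (\<forall>x. A x \<le> exp e * B x \<and> B x \<le> exp e * A x) \<and> sum A S = sum B S \<and> 1 - d \<le> sum B S"
proof -
  define s where "s = (\<lambda>x. A0 x - exp (-e) * B0 x)"
  define g where "g = sum A0 S - sum B0 S"
  define c where "c = (if sum s S = 0 then 0 else g / sum s S)"
  define A where "A = (\<lambda>x. A0 x - c * s x)"
  have ee: "exp e * exp (-e) = 1" by (simp add: exp_minus field_simps)
  have ex1: "exp (-e) \<le> 1" "1 \<le> exp e" using e by auto
  have s0: "s x \<ge> 0" for x
  proof -
    have "exp (-e) * B0 x \<le> exp (-e) * (exp e * pmf p x)"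
      unfolding B0_def by (intro mult_left_mono) auto
    also have "\<dots> = pmf p x" using ee by (simp add: mult.assoc[symmetric] mult.commute)
    finally have 1: "exp (-e) * B0 x \<le> pmf p x" .
    have "exp (-e) * B0 x \<le> 1 * pmf q x"
      unfolding B0_def by (intro mult_mono ex1) auto
    also have "\<dots> \<le> exp e * pmf q x" by (intro mult_right_mono ex1) auto
    finally have 2: "exp (-e) * B0 x \<le> exp e * pmf q x" by simp
    show ?thesis using 1 2 unfolding s_def A0_def by simp
  qed
  have B00: "B0 x \<ge> 0" for x unfolding B0_def by auto
  have sumB0: "sum B0 S \<ge> 0" by (intro sum_nonneg B00)
  have sums: "sum s S = sum A0 S - exp (-e) * sum B0 S"
    by (simp add: s_def sum_subtractf sum_distrib_left)
  have gs: "g \<le> sum s S" unfolding sums g_def using ex1 sumB0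
    by (smt (verit) mult_left_le_one_le exp_ge_zero)
  have g0: "0 \<le> g" using ge g_def by simp
  have c01: "0 \<le> c" "c \<le> 1" using gs g0 unfolding c_def by (auto simp: divide_le_eq_1)
  have csum: "c * sum s S = g" using gs g0 unfolding c_def by auto
  have P: "0 \<le> A x \<and> A x \<le> pmf p x \<and> 0 \<le> B0 x \<and> B0 x \<le> pmf q x \<and> A x \<le> exp e * B0 x \<and> B0 x \<le> exp e * A x" for x
  proof -
    have "A x \<ge> A0 x - s x" unfolding A_def using c01 s0[of x] by (smt (verit) mult_left_le_one_le)
    hence lowA: "A x \<ge> exp (-e) * B0 x" unfolding s_def by simp
    have a1: "0 \<le> A x" using lowA B00[of x] by (smt (verit) exp_ge_zero mult_nonneg_nonneg)
    have upA: "A x \<le> A0 x" unfolding A_def using c01 s0[of x] by (simp add: mult_nonneg_nonneg)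
    have a2: "A x \<le> pmf p x" using upA unfolding A0_def by simp
    have b2: "B0 x \<le> pmf q x" unfolding B0_def by simp
    have "exp e * A x \<ge> exp e * (exp (-e) * B0 x)" using lowA by (intro mult_left_mono) auto
    hence r1: "B0 x \<le> exp e * A x" using ee by (simp add: mult.assoc[symmetric])
    have "A0 x \<le> exp e * B0 x"
    proof -
      have "A0 x \<le> exp e * pmf q x" unfolding A0_def by simp
      moreover have "A0 x \<le> exp e * (exp e * pmf p x)"
      proof -
        have "A0 x \<le> 1 * (1 * pmf p x)" unfolding A0_def by simp
        also have "\<dots> \<le> exp e * (exp e * pmf p x)" by (intro mult_mono ex1) auto
        finally show ?thesis .
      qed
      ultimately show ?thesis unfolding B0_def by (simp add: min_def)
    qed
    hence r2: "A x \<le> exp e * B0 x" using upA by simp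
    show ?thesis using a1 a2 B00[of x] b2 r1 r2 by simp
  qed
  have "sum A S = sum B0 S" unfolding A_def
    by (simp add: sum_subtractf sum_distrib_left[symmetric] csum g_def)
  then show ?thesis using P mB by (intro exI[of _ A] exI[of _ B0]) auto
qed

lemma decomp:
  fixes p q :: "'a pmf"
  assumes S: "finite S" "set_pmf p \<subseteq> S" "set_pmf q \<subseteq> S" and e: "e \<ge> 0"
    and i1: "indist e d p q" and i2: "indist e d q p"
  shows "\<exists>A B. (\<forall>x. 0 \<le> A x \<and> A x \<le> pmf p x) \<and> (\<forall>x. 0 \<le> B x \<and> B x \<le> pmf q x) \<and>
     (\<forall>x. A x \<le> exp e * B x \<and> B x \<le> exp e * A x) \<and> sum A S = sum B S \<and> 1 - d \<le> sum A S"
proof (cases "(\<Sum>x\<in>S. min (pmf q x) (exp e * pmf p x)) \<le> (\<Sum>x\<in>S. min (pmf p x) (exp e * pmf q x))")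
  case True
  from decomp_half[OF S(1) e, of q p d, OF True mass_min_ge[OF S(1,3,2) i2]]
  show ?thesis by metis
next
  case False
  hence F: "(\<Sum>x\<in>S. min (pmf p x) (exp e * pmf q x)) \<le> (\<Sum>x\<in>S. min (pmf q x) (exp e * pmf p x))" by simp
  from decomp_half[OF S(1) e, of p q d, OF F mass_min_ge[OF S i1]]
  obtain A B where "(\<forall>x. 0 \<le> A x \<and> A x \<le> pmf q x) \<and> (\<forall>x. 0 \<le> B x \<and> B x \<le> pmf p x) \<and>
     (\<forall>x. A x \<le> exp e * B x \<and> B x \<le> exp e * A x) \<and> sum A S = sum B S \<and> 1 - d \<le> sum B S" by blast
  then show ?thesis by (intro exI[of _ B] exI[of _ A]) auto
qed

lemma hoeffding_finite:
  fixes w f :: "'a \<Rightarrow> real"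
  assumes S: "finite S" and w0: "\<And>x. x \<in> S \<Longrightarrow> w x \<ge> 0" and w1: "sum w S = 1"
    and ab: "\<And>x. x \<in> S \<Longrightarrow> a \<le> f x \<and> f x \<le> b" and l: "l > 0"
  shows "(\<Sum>x\<in>S. w x * exp (l * (f x - (\<Sum>y\<in>S. w y * f y)))) \<le> exp (l\<^sup>2 * (b - a)\<^sup>2 / 8)"
proof -
  define w' where "w' = (\<lambda>x. if x \<in> S then w x else 0)"
  have w'0: "\<And>x. w' x \<ge> 0" using w0 by (auto simp: w'_def)
  have int1: "(\<integral>\<^sup>+x. ennreal (w' x) \<partial>count_space UNIV) = 1"
    using S w1 by (subst nn_integral_count_space'[of S]) (auto simp: w'_def sum_ennreal[symmetric] w0 intro!: sum.cong)
  define P where "P = embed_pmf w'"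
  have pmfP: "pmf P x = w' x" for x
    unfolding P_def by (rule pmf_embed_pmf[OF w'0 int1])
  have setP: "set_pmf P \<subseteq> S" by (auto simp: set_pmf_eq pmfP w'_def)
  interpret interval_bounded_random_variable "measure_pmf P" f a b
    by unfold_locales (use setP ab in \<open>auto simp: AE_measure_pmf_iff\<close>)
  have E: "measure_pmf.expectation P f = (\<Sum>y\<in>S. w y * f y)"
  proof -
    have "measure_pmf.expectation P f = (\<Sum>a\<in>S. pmf P a *\<^sub>R f a)"
      by (rule integral_measure_pmf[OF S]) (use setP in auto)
    then show ?thesis by (auto simp: pmfP w'_def intro!: sum.cong)
  qed
  have "(\<integral>\<^sup>+x. ennreal (exp (l * (f x - measure_pmf.expectation P f))) \<partial>measure_pmf P) \<le> ennreal (exp (l\<^sup>2 * (b - a)\<^sup>2 / 8))"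
    by (rule Hoeffdings_lemma_nn_integral[OF l])
  also have "(\<integral>\<^sup>+x. ennreal (exp (l * (f x - measure_pmf.expectation P f))) \<partial>measure_pmf P) =
      (\<Sum>x\<in>S. ennreal (exp (l * (f x - measure_pmf.expectation P f))) * pmf P x)"
    using setP by (subst nn_integral_measure_pmf_support[of S]) (auto simp: S)
  also have "\<dots> = ennreal (\<Sum>x\<in>S. w x * exp (l * (f x - (\<Sum>y\<in>S. w y * f y))))"
    by (subst sum_ennreal[symmetric]) (auto simp: pmfP w'_def E w0 ennreal_mult'[symmetric] mult.commute intro!: sum.cong)
  finally show ?thesis by (subst (asm) ennreal_le_iff) auto
qed

definition gf :: "real \<Rightarrow> ('a \<Rightarrow> real) \<Rightarrow> ('a \<Rightarrow> real) \<Rightarrow> 'a \<Rightarrow> real" where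
  "gf t A B x = (if A x > 0 then A x * (A x / B x) powr t else 0)"

lemma ratio_bound:
  fixes u e :: real
  assumes "u > 0" "u \<le> exp e" "1 \<le> u * exp e" "e \<ge> 0"
  shows "(u - 1) * ln u \<le> (exp e - 1) * e"
proof -
  have l1: "ln u \<le> e" using assms by (metis ln_exp ln_le_cancel_iff exp_gt_zero)
  have "ln 1 \<le> ln (u * exp e)" using assms by (subst ln_le_cancel_iff) auto
  hence l2: "- e \<le> ln u" using assms by (simp add: ln_mult)
  show ?thesis
  proof (cases "u \<ge> 1")
    case True
    have "ln u \<ge> 0" using True by simp
    have "(u - 1) * ln u \<le> (exp e - 1) * ln u" using True assms \<open>ln u \<ge> 0\<close> by (intro mult_right_mono) auto
    also have "\<dots> \<le> (exp e - 1) * e" using l1 assms by (intro mult_left_mono) auto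
    finally show ?thesis .
  next
    case False
    have "ln u \<le> 0" using False assms by simp
    have "1 - u \<le> exp e - 1"
    proof -
      have "1 \<le> u * exp e" by fact
      have "exp e * (exp e - 1) - exp e * (1 - u) = exp e * exp e - 2 * exp e + u * exp e" by (simp add: algebra_simps)
      also have "\<dots> \<ge> exp e * exp e - 2 * exp e + 1" using assms by simp
      also have "exp e * exp e - 2 * exp e + 1 = (exp e - 1)^2" by (simp add: power2_eq_square algebra_simps)
      finally have "exp e * (1 - u) \<le> exp e * (exp e - 1)" by (smt (verit) zero_le_power2)
      thus ?thesis by simp
    qed
    have "(u - 1) * ln u = (1 - u) * (- ln u)" by (simp add: algebra_simps)
    also have "\<dots> \<le> (exp e - 1) * e"
      using \<open>1 - u \<le> exp e - 1\<close> l2 \<open>ln u \<le> 0\<close> False by (intro mult_mono) auto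
    finally show ?thesis .
  qed
qed

lemma mgf_bound:
  fixes A B :: "'a \<Rightarrow> real"
  assumes S: "finite S" and A0: "\<And>x. 0 \<le> A x" and AB: "\<And>x. A x \<le> exp e * B x" and BA: "\<And>x. B x \<le> exp e * A x"
    and eq: "sum A S = sum B S" and e: "e \<ge> 0" and t: "t \<ge> 0"
  shows "(\<Sum>x\<in>S. gf t A B x) \<le> sum A S * exp (t * e * (exp e - 1) + t\<^sup>2 * e\<^sup>2 / 2)"
proof -
  define m where "m = sum A S"
  define S' where "S' = {x\<in>S. A x > 0}"
  have fS': "finite S'" using S by (simp add: S'_def)
  have B0: "B x \<ge> 0" for x using AB[of x] A0[of x] by (smt (verit) exp_gt_zero mult_nonneg_nonneg zero_le_mult_iff)
  have Bpos: "B x > 0" if "A x > 0" for x using AB[of x] that B0[of x] by (smt (verit) mult_eq_0_iff)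
  have Bzero: "B x = 0" if "\<not> A x > 0" for x using BA[of x] that A0[of x] B0[of x] by simp
  have mS': "sum A S' = m" unfolding m_def S'_def using S A0
    by (intro sum.mono_neutral_left) (auto simp: less_le)
  have mS'B: "sum B S' = m" unfolding m_def eq S'_def using S Bzero
    by (intro sum.mono_neutral_left) auto
  have gfS: "(\<Sum>x\<in>S. gf t A B x) = (\<Sum>x\<in>S'. A x * exp (t * ln (A x / B x)))"
    unfolding S'_def
  proof (subst sum.inter_filter[OF S])
    show "(\<Sum>x\<in>S. gf t A B x) = (\<Sum>x\<in>S. if 0 < A x then A x * exp (t * ln (A x / B x)) else 0)"
    proof (intro sum.cong refl)
      fix x assume "x \<in> S"
      show "gf t A B x = (if 0 < A x then A x * exp (t * ln (A x / B x)) else 0)"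
        using Bpos[of x] by (cases "A x > 0") (auto simp: gf_def powr_def)
    qed
  qed
  show ?thesis
  proof (cases "m = 0")
    case True
    have "S' = {}"
    proof (rule ccontr)
      assume "S' \<noteq> {}"
      then obtain x where x: "x \<in> S'" by auto
      have "A x \<le> sum A S'" using fS' x A0 by (intro member_le_sum) auto
      then show False using x True mS' by (auto simp: S'_def)
    qed
    then show ?thesis using gfS True m_def by simp
  next
    case False
    hence mpos: "m > 0" using A0 m_def by (metis sum_nonneg less_le)
    define w where "w = (\<lambda>x. A x / m)"
    define L where "L = (\<lambda>x. ln (A x / B x))"
    define mu where "mu = (\<Sum>y\<in>S'. w y * L y)"
    have w0: "w x \<ge> 0" for x using A0 mpos by (simp add: w_def)
    have w1: "sum w S' = 1" using mS' mpos by (simp add: w_def sum_divide_distrib[symmetric])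
    have Lb: "- e \<le> L x \<and> L x \<le> e" if "x \<in> S'" for x
    proof -
      have pos: "A x > 0" "B x > 0" using that Bpos by (auto simp: S'_def)
      have "A x / B x \<le> exp e" using AB[of x] pos by (simp add: divide_le_eq mult.commute)
      hence "L x \<le> e" unfolding L_def using pos by (metis divide_pos_pos ln_exp ln_le_cancel_iff exp_gt_zero)
      moreover have "exp (-e) \<le> A x / B x" using BA[of x] pos
        by (simp add: exp_minus le_divide_eq divide_le_eq field_simps)
      hence "-e \<le> L x" unfolding L_def using pos by (metis divide_pos_pos ln_exp ln_le_cancel_iff exp_gt_zero)
      ultimately show ?thesis by simp
    qed
    have mu_le: "mu \<le> e * (exp e - 1)"
    proof -
      have g: "(\<Sum>x\<in>S'. B x * L x) \<le> 0"
      proof -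
        have "(\<Sum>x\<in>S'. B x * L x) \<le> (\<Sum>x\<in>S'. B x * (A x / B x - 1))"
        proof (intro sum_mono mult_left_mono)
          fix x assume "x \<in> S'"
          then have pos: "A x > 0" "B x > 0" using Bpos by (auto simp: S'_def)
          show "L x \<le> A x / B x - 1" unfolding L_def using pos by (intro ln_le_minus_one) auto
          show "0 \<le> B x" by (rule B0)
        qed
        also have "\<dots> = (\<Sum>x\<in>S'. A x - B x)"
        proof (intro sum.cong refl)
          fix x assume "x \<in> S'"
          then have "B x > 0" using Bpos by (auto simp: S'_def)
          then show "B x * (A x / B x - 1) = A x - B x" by (simp add: field_simps)
        qed
        also have "\<dots> = 0" using mS' mS'B by (simp add: sum_subtractf)
        finally show ?thesis .
      qed
      have h: "(A x - B x) * L x \<le> B x * ((exp e - 1) * e)" if "x \<in> S'" for x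
      proof -
        have pos: "A x > 0" "B x > 0" using that Bpos by (auto simp: S'_def)
        have "(A x / B x - 1) * ln (A x / B x) \<le> (exp e - 1) * e"
        proof (rule ratio_bound)
          show "A x / B x \<le> exp e" using AB[of x] pos by (simp add: divide_le_eq mult.commute)
          show "1 \<le> A x / B x * exp e" using BA[of x] pos by (simp add: field_simps)
        qed (use pos e in auto)
        hence "B x * ((A x / B x - 1) * ln (A x / B x)) \<le> B x * ((exp e - 1) * e)"
          using pos by (intro mult_left_mono) auto
        moreover have "B x * ((A x / B x - 1) * ln (A x / B x)) = (A x - B x) * L x"
          using pos by (simp add: L_def field_simps)
        ultimately show ?thesis by simp
      qed
      have "(\<Sum>x\<in>S'. A x * L x) = (\<Sum>x\<in>S'. B x * L x) + (\<Sum>x\<in>S'. (A x - B x) * L x)"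
        by (simp add: sum.distrib[symmetric] algebra_simps)
      also have "\<dots> \<le> 0 + (\<Sum>x\<in>S'. B x * ((exp e - 1) * e))"
        using g h by (intro add_mono sum_mono) auto
      also have "\<dots> = m * ((exp e - 1) * e)" using mS'B by (simp add: sum_distrib_right[symmetric])
      finally have "(\<Sum>x\<in>S'. A x * L x) \<le> m * ((exp e - 1) * e)" .
      moreover have "mu = (\<Sum>x\<in>S'. A x * L x) / m"
        by (simp add: mu_def w_def sum_divide_distrib)
      ultimately show ?thesis using mpos by (simp add: divide_le_eq mult.commute)
    qed
    have main: "(\<Sum>x\<in>S'. w x * exp (t * L x)) \<le> exp (t * mu + t\<^sup>2 * e\<^sup>2 / 2)"
    proof (cases "t = 0")
      case True
      then show ?thesis using w1 by simp
    next
      case False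
      hence tpos: "t > 0" using t by simp
      have H: "(\<Sum>x\<in>S'. w x * exp (t * (L x - mu))) \<le> exp (t\<^sup>2 * (e - (- e))\<^sup>2 / 8)"
        unfolding mu_def by (rule hoeffding_finite[OF fS' w0 w1 _ tpos]) (use Lb in auto)
      have "(\<Sum>x\<in>S'. w x * exp (t * L x)) = exp (t * mu) * (\<Sum>x\<in>S'. w x * exp (t * (L x - mu)))"
        by (simp add: sum_distrib_left right_diff_distrib exp_diff)
      also have "\<dots> \<le> exp (t * mu) * exp (t\<^sup>2 * (e - (- e))\<^sup>2 / 8)"
        using H by (intro mult_left_mono) auto
      also have "\<dots> = exp (t * mu + t\<^sup>2 * e\<^sup>2 / 2)"
        by (simp add: exp_add[symmetric] power2_eq_square algebra_simps)
      finally show ?thesis .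
    qed
    have "(\<Sum>x\<in>S. gf t A B x) = m * (\<Sum>x\<in>S'. w x * exp (t * L x))"
      unfolding gfS using mpos by (simp add: sum_distrib_left w_def L_def)
    also have "\<dots> \<le> m * exp (t * mu + t\<^sup>2 * e\<^sup>2 / 2)" using main mpos by (intro mult_left_mono) auto
    also have "\<dots> \<le> m * exp (t * e * (exp e - 1) + t\<^sup>2 * e\<^sup>2 / 2)"
      using mu_le t mpos by (intro mult_left_mono) (auto simp: mult_left_mono mult.assoc)
    finally show ?thesis by (simp add: m_def)
  qed
qed

lemma sum_prodl:
  assumes "length fs = length Ss" "\<And>S. S \<in> set Ss \<Longrightarrow> finite S"
  shows "(\<Sum>xs\<in>lsets Ss. prodl fs xs) = prod_list (map2 (\<lambda>f S. sum f S) fs Ss)"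
  using assms
proof (induction fs Ss rule: list_induct2)
  case Nil
  then show ?case by simp
next
  case (Cons f fs S Ss)
  have inj: "inj_on (\<lambda>(x,xs). x # xs) (S \<times> lsets Ss)" by (auto simp: inj_on_def)
  have fin: "finite S" "finite (lsets Ss)" using Cons.prems by (auto intro!: finite_lsets)
  have "(\<Sum>xs\<in>lsets (S # Ss). prodl (f # fs) xs) = (\<Sum>(x,xs)\<in>S \<times> lsets Ss. f x * prodl fs xs)"
    unfolding lsets_Cons by (subst sum.reindex[OF inj]) (auto simp: case_prod_beta intro!: sum.cong)
  also have "\<dots> = sum f S * (\<Sum>xs\<in>lsets Ss. prodl fs xs)"
    by (simp add: sum_product sum.cartesian_product)
  finally show ?case using Cons by simp
qed

lemma prodl_mono:
  assumes "length fs = length gs" "\<And>i x. i < length fs \<Longrightarrow> 0 \<le> (fs ! i) x \<and> (fs ! i) x \<le> (gs ! i) x"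
  shows "0 \<le> prodl fs xs \<and> prodl fs xs \<le> prodl gs xs"
  using assms
proof (induction fs gs arbitrary: xs rule: list_induct2)
  case Nil
  then show ?case by (cases xs) auto
next
  case (Cons f fs g gs)
  show ?case
  proof (cases xs)
    case Nil
    then show ?thesis by simp
  next
    case (Cons y ys)
    have h: "0 \<le> f y \<and> f y \<le> g y" using Cons.prems[of 0] by simp
    have ih: "0 \<le> prodl fs ys \<and> prodl fs ys \<le> prodl gs ys"
      using Cons.IH[of ys] Cons.prems by (metis Suc_mono length_Cons nth_Cons_Suc)
    show ?thesis using h ih Cons by (auto intro: mult_mono)
  qed
qed

lemma prodl_pos_imp:
  assumes "length fs = length gs" "\<And>i x. i < length fs \<Longrightarrow> (fs ! i) x > 0 \<Longrightarrow> (gs ! i) x > 0"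
    "\<And>i x. i < length fs \<Longrightarrow> 0 \<le> (fs ! i) x"
  shows "prodl fs xs > 0 \<Longrightarrow> prodl gs xs > 0"
  using assms
proof (induction fs gs arbitrary: xs rule: list_induct2)
  case Nil
  then show ?case by (cases xs) auto
next
  case (Cons f fs g gs)
  show ?case
  proof (cases xs)
    case Nil
    then show ?thesis using Cons.prems by simp
  next
    case (Cons y ys)
    have f0: "f y \<ge> 0" using Cons.prems(3)[of 0] by simp
    have p0: "prodl fs ys \<ge> 0"
      using prodl_mono[of fs fs ys] Cons.prems(3) by (metis Suc_mono length_Cons nth_Cons_Suc order_refl)
    have "f y * prodl fs ys > 0" using Cons.prems(1) Cons by simp
    hence "f y > 0" "prodl fs ys > 0" using f0 p0 by (auto simp: zero_less_mult_iff)
    hence "g y > 0" "prodl gs ys > 0"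
      using Cons.prems(2)[of 0] Cons.IH[of ys] Cons.prems(2,3) by (auto, metis Suc_mono length_Cons nth_Cons_Suc)
    then show ?thesis using Cons by simp
  qed
qed

lemma prodl_gf:
  assumes "length As = length Bs" "\<And>i x. i < length As \<Longrightarrow> (As ! i) x > 0 \<Longrightarrow> (Bs ! i) x > 0"
    "\<And>i x. i < length As \<Longrightarrow> 0 \<le> (As ! i) x"
  shows "prodl (map2 (gf t) As Bs) xs = gf t (prodl As) (prodl Bs) xs"
  using assms
proof (induction As Bs arbitrary: xs rule: list_induct2)
  case Nil
  then show ?case by (cases xs) (auto simp: gf_def)
next
  case (Cons A As B Bs)
  show ?case
  proof (cases xs)
    case Nil
    then show ?thesis by (simp add: gf_def)
  next
    case (Cons y ys)
    have A0: "A y \<ge> 0" using Cons.prems(2)[of 0] by simp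
    have p0: "prodl As ys \<ge> 0"
      using prodl_mono[of As As ys] Cons.prems(2) by (metis Suc_mono length_Cons nth_Cons_Suc order_refl)
    have ih: "prodl (map2 (gf t) As Bs) ys = gf t (prodl As) (prodl Bs) ys"
      using Cons.IH[of ys] Cons.prems by (metis Suc_mono length_Cons nth_Cons_Suc)
    have Bp: "A y > 0 \<Longrightarrow> B y > 0" using Cons.prems(1)[of 0] by simp
    have PBp: "prodl As ys > 0 \<Longrightarrow> prodl Bs ys > 0"
      by (rule prodl_pos_imp[OF Cons.hyps]) (use Cons.prems in \<open>metis Suc_mono length_Cons nth_Cons_Suc\<close>)+
    show ?thesis
    proof (cases "A y > 0 \<and> prodl As ys > 0")
      case True
      then have pos: "A y > 0" "prodl As ys > 0" "B y > 0" "prodl Bs ys > 0" using Bp PBp by auto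
      have "(A y * prodl As ys / (B y * prodl Bs ys)) powr t = (A y / B y) powr t * (prodl As ys / prodl Bs ys) powr t"
        using pos by (simp add: powr_mult[symmetric])
      have g1: "gf t A B y = A y * (A y / B y) powr t" using pos by (simp add: gf_def)
      have g2: "gf t (prodl (A # As)) (prodl (B # Bs)) (y # ys) = (A y * prodl As ys) * ((A y * prodl As ys) / (B y * prodl Bs ys)) powr t"
        using pos by (simp add: gf_def)
      have g3: "gf t (prodl As) (prodl Bs) ys = prodl As ys * (prodl As ys / prodl Bs ys) powr t"
        using pos by (simp add: gf_def)
      have "prodl (map2 (gf t) (A # As) (B # Bs)) xs = gf t A B y * prodl (map2 (gf t) As Bs) ys"
        using Cons by simp
      also have "\<dots> = gf t (prodl (A # As)) (prodl (B # Bs)) (y # ys)"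
        unfolding g1 g2 ih g3 \<open>(A y * prodl As ys / (B y * prodl Bs ys)) powr t = _\<close> by (simp add: algebra_simps)
      finally show ?thesis using Cons by simp
    next
      case False
      then have "A y = 0 \<or> prodl As ys = 0" using A0 p0 by auto
      have "prodl (map2 (gf t) (A # As) (B # Bs)) xs = gf t A B y * prodl (map2 (gf t) As Bs) ys"
        using Cons by simp
      moreover have "gf t A B y * gf t (prodl As) (prodl Bs) ys = 0"
        using \<open>A y = 0 \<or> prodl As ys = 0\<close> by (auto simp: gf_def)
      moreover have "gf t (prodl (A # As)) (prodl (B # Bs)) (y # ys) = 0"
        using \<open>A y = 0 \<or> prodl As ys = 0\<close> by (auto simp: gf_def)
      ultimately show ?thesis using ih Cons by simp
    qed
  qed
qed

lemma prod_list_le_one: "(\<And>m. m \<in> set ms \<Longrightarrow> 0 \<le> m \<and> m \<le> (1::real)) \<Longrightarrow> prod_list ms \<le> 1"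
  by (induction ms) (auto intro!: mult_le_one prod_list_nonneg)

lemma one_minus_prod_list:
  assumes "\<And>m. m \<in> set ms \<Longrightarrow> 0 \<le> m \<and> m \<le> 1 \<and> 1 - d \<le> m"
  shows "1 - prod_list ms \<le> real (length ms) * d"
  using assms
proof (induction ms)
  case Nil
  then show ?case by simp
next
  case (Cons m ms)
  have h: "0 \<le> m" "m \<le> 1" "1 - d \<le> m" using Cons.prems by auto
  have ih: "1 - prod_list ms \<le> real (length ms) * d" using Cons by auto
  have p: "0 \<le> prod_list ms" "prod_list ms \<le> 1" using Cons.prems
    by (auto intro!: prod_list_nonneg prod_list_le_one)
  have "1 - m * prod_list ms = (1 - m) + m * (1 - prod_list ms)" by (simp add: algebra_simps)
  also have "\<dots> \<le> d + 1 * (real (length ms) * d)"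
    using h ih p by (intro add_mono mult_mono) auto
  finally show ?case by (simp add: algebra_simps)
qed

lemma prod_list_map_mono:
  fixes f g :: "'b \<Rightarrow> real"
  assumes "\<And>x. x \<in> set xs \<Longrightarrow> 0 \<le> f x \<and> f x \<le> g x"
  shows "prod_list (map f xs) \<le> prod_list (map g xs)"
  using assms
proof (induction xs)
  case Nil then show ?case by simp
next
  case (Cons x xs)
  have "0 \<le> prod_list (map f xs)" using Cons.prems by (auto intro!: prod_list_nonneg)
  moreover have "0 \<le> f x" "f x \<le> g x" using Cons.prems by auto
  moreover have "0 \<le> g x" using \<open>0 \<le> f x\<close> \<open>f x \<le> g x\<close> by linarith
  ultimately have "f x * prod_list (map f xs) \<le> g x * prod_list (map g xs)"
    using Cons by (intro mult_mono) auto
  then show ?case by simp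
qed

lemma lsets_mono: "length Ss = length Ts \<Longrightarrow> (\<And>i. i < length Ss \<Longrightarrow> Ss ! i \<subseteq> Ts ! i) \<Longrightarrow> lsets Ss \<subseteq> lsets Ts"
  by (auto simp: lsets_def list_all2_conv_all_nth) blast

theorem composition:
  fixes Ps Qs :: "'a pmf list" and e e0 d0 t :: real
  assumes len: "length Qs = length Ps"
    and fin: "\<And>j. j < length Ps \<Longrightarrow> finite (set_pmf (Ps ! j)) \<and> finite (set_pmf (Qs ! j))"
    and ind: "\<And>j. j < length Ps \<Longrightarrow> indist e0 d0 (Ps ! j) (Qs ! j) \<and> indist e0 d0 (Qs ! j) (Ps ! j)"
    and e0: "e0 \<ge> 0" and t: "t \<ge> 0"
  shows "indist e (real (length Ps) * d0 + exp (- t * e) * exp (real (length Ps) * (t * e0 * (exp e0 - 1) + t\<^sup>2 * e0\<^sup>2 / 2)))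
           (list_pmf Ps) (list_pmf Qs)"
proof -
  define r where "r = length Ps"
  define S where "S = (\<lambda>j. set_pmf (Ps ! j) \<union> set_pmf (Qs ! j))"
  define c where "c = t * e0 * (exp e0 - 1) + t\<^sup>2 * e0\<^sup>2 / 2"
  define Prop where "Prop = (\<lambda>j (A::'a \<Rightarrow> real) (B::'a \<Rightarrow> real). (\<forall>x. 0 \<le> A x \<and> A x \<le> pmf (Ps ! j) x) \<and> (\<forall>x. 0 \<le> B x \<and> B x \<le> pmf (Qs ! j) x) \<and>
     (\<forall>x. A x \<le> exp e0 * B x \<and> B x \<le> exp e0 * A x) \<and> sum A (S j) = sum B (S j) \<and> 1 - d0 \<le> sum A (S j))"
  have finS: "finite (S j)" if "j < r" for j using fin[of j] that by (simp add: S_def r_def)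
  have finP: "finite (set_pmf (Ps ! j))" if "j < r" for j using fin[of j] that by (simp add: r_def)
  have finQ: "finite (set_pmf (Qs ! j))" if "j < r" for j using fin[of j] that by (simp add: r_def)
  have "\<forall>j. \<exists>AB. j < r \<longrightarrow> Prop j (fst AB) (snd AB)"
  proof
    fix j
    show "\<exists>AB. j < r \<longrightarrow> Prop j (fst AB) (snd AB)"
    proof (cases "j < r")
      case True
      have "\<exists>A B. Prop j A B"
        unfolding Prop_def
        by (rule decomp[OF finS[OF True] _ _ e0]) (use ind[of j] True in \<open>auto simp: S_def r_def\<close>)
      then show ?thesis by auto
    qed auto
  qed
  then obtain AB where AB: "\<And>j. j < r \<Longrightarrow> Prop j (fst (AB j)) (snd (AB j))" by metis
  define A where "A = (\<lambda>j. fst (AB j))"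
  define B where "B = (\<lambda>j. snd (AB j))"
  have AB': "Prop j (A j) (B j)" if "j < r" for j using AB[OF that] by (simp add: A_def B_def)
  have A0: "0 \<le> A j x" if "j < r" for j x using AB'[OF that] unfolding Prop_def by blast
  have AP: "A j x \<le> pmf (Ps ! j) x" if "j < r" for j x using AB'[OF that] unfolding Prop_def by blast
  have B0: "0 \<le> B j x" if "j < r" for j x using AB'[OF that] unfolding Prop_def by blast
  have BQ: "B j x \<le> pmf (Qs ! j) x" if "j < r" for j x using AB'[OF that] unfolding Prop_def by blast
  have AB1: "A j x \<le> exp e0 * B j x" if "j < r" for j x using AB'[OF that] unfolding Prop_def by blast
  have BA1: "B j x \<le> exp e0 * A j x" if "j < r" for j x using AB'[OF that] unfolding Prop_def by blast
  have sAB: "sum (A j) (S j) = sum (B j) (S j)" if "j < r" for j using AB'[OF that] unfolding Prop_def by blast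
  have mA: "1 - d0 \<le> sum (A j) (S j)" if "j < r" for j using AB'[OF that] unfolding Prop_def by blast
  define Ss where "Ss = map S [0..<r]"
  define U where "U = lsets Ss"
  define PP where "PP = prodl (map pmf Ps)"
  define PQ where "PQ = prodl (map pmf Qs)"
  define PA where "PA = prodl (map A [0..<r])"
  define PB where "PB = prodl (map B [0..<r])"
  have mapP: "map pmf Ps = map (\<lambda>j. pmf (Ps ! j)) [0..<r]" unfolding r_def by (rule nth_equalityI) auto
  have mapQ: "map pmf Qs = map (\<lambda>j. pmf (Qs ! j)) [0..<r]" unfolding r_def using len by (intro nth_equalityI) auto
  have finU: "finite U" unfolding U_def Ss_def by (rule finite_lsets) (auto intro: finS)
  have setP: "set_pmf (list_pmf Ps) \<subseteq> U" unfolding U_def Ss_def set_list_pmf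
    by (rule lsets_mono) (auto simp: r_def S_def)
  have setQ: "set_pmf (list_pmf Qs) \<subseteq> U" unfolding U_def Ss_def set_list_pmf
    by (rule lsets_mono) (use len in \<open>auto simp: r_def S_def\<close>)
  have probP: "measure_pmf.prob (list_pmf Ps) T = (\<Sum>xs\<in>U \<inter> T. PP xs)" for T
    using prob_as_sum[OF finU setP] by (simp add: PP_def pmf_list_pmf)
  have probQ: "measure_pmf.prob (list_pmf Qs) T = (\<Sum>xs\<in>U \<inter> T. PQ xs)" for T
    using prob_as_sum[OF finU setQ] by (simp add: PQ_def pmf_list_pmf)
  have PAP: "0 \<le> PA xs \<and> PA xs \<le> PP xs" for xs
    unfolding PA_def PP_def mapP by (rule prodl_mono) (simp_all add: A0 AP)
  have PBQ: "0 \<le> PB xs \<and> PB xs \<le> PQ xs" for xs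
    unfolding PB_def PQ_def mapQ by (rule prodl_mono) (simp_all add: B0 BQ)
  have Bpos: "B j x > 0" if "j < r" "A j x > 0" for j x
  proof -
    have "0 < exp e0 * B j x" using AB1[OF that(1), of x] that(2) by linarith
    then show ?thesis by (simp add: zero_less_mult_iff)
  qed
  have PBpos: "PB xs > 0" if "PA xs > 0" for xs
    using that unfolding PA_def PB_def by (rule prodl_pos_imp[rotated 3]) (simp_all add: Bpos A0)
  have sumPP: "(\<Sum>xs\<in>U. PP xs) = 1"
  proof -
    have "(\<Sum>xs\<in>U. PP xs) = prod_list (map (\<lambda>j. sum (pmf (Ps ! j)) (S j)) [0..<r])"
      unfolding U_def PP_def mapP Ss_def
      by (subst sum_prodl) (auto intro: finS simp: zip_map_map zip_same_conv_map comp_def)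
    also have "\<dots> = prod_list (map (\<lambda>j. 1) [0..<r])"
      by (intro arg_cong[where f=prod_list] map_cong refl sum_pmf_eq_1) (auto intro: finS simp: S_def finP finQ)
    finally show ?thesis by (simp add: prod_list_replicate map_replicate_const)
  qed
  have sumPA: "1 - (\<Sum>xs\<in>U. PA xs) \<le> real r * d0"
  proof -
    have "(\<Sum>xs\<in>U. PA xs) = prod_list (map (\<lambda>j. sum (A j) (S j)) [0..<r])"
      unfolding U_def PA_def Ss_def
      by (subst sum_prodl) (auto intro: finS simp: zip_map_map zip_same_conv_map comp_def)
    moreover have "1 - prod_list (map (\<lambda>j. sum (A j) (S j)) [0..<r]) \<le> real r * d0"
    proof -
      have "1 - prod_list (map (\<lambda>j. sum (A j) (S j)) [0..<r]) \<le> real (length (map (\<lambda>j. sum (A j) (S j)) [0..<r])) * d0"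
      proof (rule one_minus_prod_list)
        fix m assume "m \<in> set (map (\<lambda>j. sum (A j) (S j)) [0..<r])"
        then obtain j where j: "j < r" "m = sum (A j) (S j)" by auto
        have "sum (A j) (S j) \<le> sum (pmf (Ps ! j)) (S j)" using AP[OF j(1)] by (intro sum_mono) auto
        also have "\<dots> = 1" by (rule sum_pmf_eq_1[OF finS[OF j(1)]]) (auto simp: S_def)
        moreover have "0 \<le> sum (A j) (S j)" using A0[OF j(1)] by (intro sum_nonneg) auto
        ultimately show "0 \<le> m \<and> m \<le> 1 \<and> 1 - d0 \<le> m" using mA[OF j(1)] j by simp
      qed
      then show ?thesis by simp
    qed
    ultimately show ?thesis by simp
  qed
  have sumG: "(\<Sum>xs\<in>U. gf t PA PB xs) \<le> exp (real r * c)"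
  proof -
    have "(\<Sum>xs\<in>U. gf t PA PB xs) = (\<Sum>xs\<in>U. prodl (map (\<lambda>j. gf t (A j) (B j)) [0..<r]) xs)"
    proof (intro sum.cong refl)
      fix xs
      have "prodl (map2 (gf t) (map A [0..<r]) (map B [0..<r])) xs = gf t PA PB xs"
        unfolding PA_def PB_def by (rule prodl_gf) (simp_all add: Bpos A0)
      then show "gf t PA PB xs = prodl (map (\<lambda>j. gf t (A j) (B j)) [0..<r]) xs"
        by (simp add: zip_map_map zip_same_conv_map comp_def)
    qed
    also have "\<dots> = prod_list (map (\<lambda>j. sum (gf t (A j) (B j)) (S j)) [0..<r])"
      unfolding U_def Ss_def
      by (subst sum_prodl) (auto intro: finS simp: zip_map_map zip_same_conv_map comp_def)
    also have "\<dots> \<le> prod_list (map (\<lambda>j. exp c) [0..<r])"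
    proof (rule prod_list_map_mono)
      fix j assume "j \<in> set [0..<r]"
      hence j: "j < r" by simp
      have "sum (gf t (A j) (B j)) (S j) \<le> sum (A j) (S j) * exp c"
        unfolding c_def by (rule mgf_bound[OF finS[OF j] A0[OF j] AB1[OF j] BA1[OF j] sAB[OF j] e0 t])
      also have "\<dots> \<le> 1 * exp c"
      proof (intro mult_right_mono)
        have "sum (A j) (S j) \<le> sum (pmf (Ps ! j)) (S j)" using AP[OF j] by (intro sum_mono) auto
        also have "\<dots> = 1" by (rule sum_pmf_eq_1[OF finS[OF j]]) (auto simp: S_def)
        finally show "sum (A j) (S j) \<le> 1" .
      qed auto
      finally have up: "sum (gf t (A j) (B j)) (S j) \<le> exp c" by simp
      have "0 \<le> sum (gf t (A j) (B j)) (S j)"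
        using A0[OF j] by (intro sum_nonneg) (auto simp: gf_def)
      then show "0 \<le> sum (gf t (A j) (B j)) (S j) \<and> sum (gf t (A j) (B j)) (S j) \<le> exp c" using up by simp
    qed
    also have "\<dots> = exp (real r * c)"
      by (simp add: prod_list_replicate map_replicate_const exp_of_nat_mult)
    finally show ?thesis .
  qed
  have cher: "PA xs \<le> exp e * PB xs + exp (- t * e) * gf t PA PB xs" for xs
  proof (cases "PA xs > exp e * PB xs")
    case True
    have PB0: "PB xs \<ge> 0" using PBQ by simp
    have pa: "PA xs > 0" using True PB0 by (smt (verit) exp_gt_zero mult_nonneg_nonneg)
    have pb: "PB xs > 0" using PBpos[OF pa] .
    have rat: "exp e \<le> PA xs / PB xs" using True pb by (simp add: le_divide_eq mult.commute)
    have "exp (t * e) = (exp e) powr t" by (simp add: powr_def mult.commute)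
    also have "\<dots> \<le> (PA xs / PB xs) powr t" using rat t by (intro powr_mono2) auto
    finally have "PA xs * exp (t * e) \<le> gf t PA PB xs" using pa by (simp add: gf_def)
    hence "exp (- t * e) * (PA xs * exp (t * e)) \<le> exp (- t * e) * gf t PA PB xs" by simp
    hence "PA xs \<le> exp (- t * e) * gf t PA PB xs" by (simp add: exp_minus field_simps)
    moreover have "0 \<le> exp e * PB xs" using PB0 by simp
    ultimately show ?thesis by simp
  next
    case False
    have "0 \<le> gf t PA PB xs" using PAP[of xs] by (auto simp: gf_def)
    then show ?thesis using False by (smt (verit) exp_gt_zero mult_nonneg_nonneg)
  qed
  show ?thesis
    unfolding indist_def
  proof
    fix T
    have "measure_pmf.prob (list_pmf Ps) T = (\<Sum>xs\<in>U \<inter> T. PA xs) + (\<Sum>xs\<in>U \<inter> T. PP xs - PA xs)"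
      by (simp add: probP sum_subtractf)
    also have "(\<Sum>xs\<in>U \<inter> T. PP xs - PA xs) \<le> (\<Sum>xs\<in>U. PP xs - PA xs)"
      using finU PAP by (intro sum_mono2) auto
    also have "(\<Sum>xs\<in>U. PP xs - PA xs) \<le> real r * d0"
      using sumPP sumPA by (simp add: sum_subtractf)
    also have "(\<Sum>xs\<in>U \<inter> T. PA xs) \<le> (\<Sum>xs\<in>U \<inter> T. exp e * PB xs + exp (- t * e) * gf t PA PB xs)"
      by (intro sum_mono cher)
    also have "\<dots> = exp e * (\<Sum>xs\<in>U \<inter> T. PB xs) + exp (- t * e) * (\<Sum>xs\<in>U \<inter> T. gf t PA PB xs)"
      by (simp add: sum.distrib sum_distrib_left)
    also have "(\<Sum>xs\<in>U \<inter> T. PB xs) \<le> measure_pmf.prob (list_pmf Qs) T"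
      unfolding probQ using PBQ by (intro sum_mono) auto
    also have "(\<Sum>xs\<in>U \<inter> T. gf t PA PB xs) \<le> (\<Sum>xs\<in>U. gf t PA PB xs)"
      using finU PAP by (intro sum_mono2) (auto simp: gf_def)
    also have "\<dots> \<le> exp (real r * c)" by (rule sumG)
    finally show "measure_pmf.prob (list_pmf Ps) T \<le> exp e * measure_pmf.prob (list_pmf Qs) T +
        (real (length Ps) * d0 + exp (- t * e) * exp (real (length Ps) * (t * e0 * (exp e0 - 1) + t\<^sup>2 * e0\<^sup>2 / 2)))"
      by (simp add: r_def c_def algebra_simps)
  qed
qed

definition Out :: "nat \<Rightarrow> real \<Rightarrow> bool list list \<Rightarrow> bool multiset pmf" where
  "Out n lam bss = map_pmf (\<lambda>ys. mset (concat ys)) (list_pmf (map (\<lambda>bs. list_pmf (map (bit_rand n lam) bs)) bss))"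

definition Col :: "nat \<Rightarrow> real \<Rightarrow> nat \<Rightarrow> bool list list \<Rightarrow> bool multiset list pmf" where
  "Col n lam r bss = list_pmf (map (\<lambda>j. bitsum_shuffled n lam (map (\<lambda>bs. bs ! j) bss)) [0..<r])"

lemma sum_list_zip_add_mset:
  "length ys = length Ms \<Longrightarrow> sum_list (map (\<lambda>(y, M). add_mset y M) (zip ys Ms)) = mset ys + sum_list Ms"
  by (induction ys Ms rule: list_induct2) auto

lemma list_pmf_const_return: "list_pmf (map (\<lambda>j. return_pmf c) xs) = return_pmf (map (\<lambda>j. c) xs)"
  using list_pmf_return[of "map (\<lambda>j. c) xs"] by (simp add: comp_def)

lemma bitsum_Cons:
  "bitsum_shuffled n lam (b # c) = map_pmf (\<lambda>(y, M). add_mset y M) (pair_pmf (bit_rand n lam b) (bitsum_shuffled n lam c))"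
  unfolding bitsum_shuffled_def list.map list_pmf_Cons_map
  by (simp add: pair_map_pmf2 pmf.map_comp comp_def case_prod_beta)

lemma Out_Cons:
  "Out n lam (bs # bss) = map_pmf (\<lambda>(y, M). mset y + M) (pair_pmf (list_pmf (map (bit_rand n lam) bs)) (Out n lam bss))"
  unfolding Out_def list.map list_pmf_Cons_map
  by (simp add: pair_map_pmf2 pmf.map_comp comp_def case_prod_beta)

lemma Out_Col:
  assumes "\<And>bs. bs \<in> set bss \<Longrightarrow> length bs = r"
  shows "Out n lam bss = map_pmf sum_list (Col n lam r bss)"
  using assms
proof (induction bss)
  case Nil
  have "Col n lam r [] = return_pmf (map (\<lambda>j. {#}) [0..<r])"
    unfolding Col_def bitsum_shuffled_def by (simp add: list_pmf_const_return)
  moreover have "Out n lam [] = return_pmf {#}" unfolding Out_def by simp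
  ultimately show ?case by (simp add: sum_list_map_eq_sum_count[symmetric])
next
  case (Cons bs bss)
  have lbs: "length bs = r" using Cons.prems by simp
  have IH: "Out n lam bss = map_pmf sum_list (Col n lam r bss)" using Cons by simp
  have mbs: "map (\<lambda>j. bit_rand n lam (bs ! j)) [0..<r] = map (bit_rand n lam) bs"
    using lbs by (intro nth_equalityI) auto
  have "Col n lam r (bs # bss) = list_pmf (map (\<lambda>j. map_pmf (\<lambda>(y, M). add_mset y M)
          (pair_pmf (bit_rand n lam (bs ! j)) (bitsum_shuffled n lam (map (\<lambda>bs. bs ! j) bss)))) [0..<r])"
    unfolding Col_def by (simp add: bitsum_Cons)
  also have "\<dots> = map_pmf (map (\<lambda>(y, M). add_mset y M)) (list_pmf (map2 pair_pmf
          (map (\<lambda>j. bit_rand n lam (bs ! j)) [0..<r]) (map (\<lambda>j. bitsum_shuffled n lam (map (\<lambda>bs. bs ! j) bss)) [0..<r])))"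
    by (simp add: list_pmf_map_pmf[symmetric] zip_map_map zip_same_conv_map comp_def)
  also have "\<dots> = map_pmf (\<lambda>z. map (\<lambda>(y, M). add_mset y M) (zip (fst z) (snd z)))
          (pair_pmf (list_pmf (map (bit_rand n lam) bs)) (Col n lam r bss))"
    by (subst list_pmf_zip) (simp_all add: mbs lbs Col_def pmf.map_comp comp_def case_prod_beta)
  finally have C: "map_pmf sum_list (Col n lam r (bs # bss)) = map_pmf (\<lambda>z. sum_list (map (\<lambda>(y, M). add_mset y M) (zip (fst z) (snd z))))
          (pair_pmf (list_pmf (map (bit_rand n lam) bs)) (Col n lam r bss))"
    by (simp add: pmf.map_comp comp_def)
  have O: "Out n lam (bs # bss) = map_pmf (\<lambda>z. mset (fst z) + sum_list (snd z))
          (pair_pmf (list_pmf (map (bit_rand n lam) bs)) (Col n lam r bss))"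
    unfolding Out_Cons IH by (simp add: pair_map_pmf2 pmf.map_comp comp_def case_prod_beta)
  show ?case unfolding C O
  proof (intro map_pmf_cong refl)
    fix z assume "z \<in> set_pmf (pair_pmf (list_pmf (map (bit_rand n lam) bs)) (Col n lam r bss))"
    then have l1: "length (fst z) = r" "length (snd z) = r"
      using lbs by (auto simp: Col_def dest!: length_in_set_list_pmf)
    show "mset (fst z) + sum_list (snd z) = sum_list (map (\<lambda>(y, M). add_mset y M) (zip (fst z) (snd z)))"
      using l1 by (simp add: sum_list_zip_add_mset)
  qed
qed

lemma arith_bound:
  fixes eps del :: real and r :: nat
  assumes eps: "0 < eps" "eps < 1" and del: "0 < del" "del < 1" and r: "r > 0"
  defines "L \<equiv> ln (2 / del)"
  defines "e0 \<equiv> eps / sqrt (8 * real r * L)" and "d0 \<equiv> del / (2 * real r)" and "t \<equiv> 4 * L / eps"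
  shows "real r * d0 + exp (- t * eps) * exp (real r * (t * e0 * (exp e0 - 1) + t\<^sup>2 * e0\<^sup>2 / 2)) \<le> del"
proof -
  have L0: "L \<ge> 2/3"
  proof -
    have "ln 2 \<le> ln (2 / del)" using del by (subst ln_le_cancel_iff) (auto simp: field_simps)
    thus ?thesis using ln2_ge_two_thirds unfolding L_def by linarith
  qed
  have rr: "real r \<ge> 1" using r by simp
  have pos: "8 * real r * L > 0" using L0 rr by simp
  have e0sq: "e0\<^sup>2 = eps\<^sup>2 / (8 * real r * L)"
    unfolding e0_def using pos by (simp add: power_divide)
  have e00: "e0 \<ge> 0" unfolding e0_def using eps pos by simp
  have "sqrt (8 * real r * L) \<ge> 1"
  proof -
    have "8 * 1 * (2/3) \<le> 8 * real r * L" using L0 rr by (intro mult_mono) auto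
    hence "8 * real r * L \<ge> 1" by (simp add: algebra_simps)
    from real_sqrt_le_mono[OF this] show ?thesis by simp
  qed
  hence "eps / sqrt (8 * real r * L) \<le> eps / 1" using eps pos by (intro divide_left_mono) (auto simp del: real_sqrt_ge_1_iff simp: algebra_simps)
  hence e01: "e0 \<le> 1" unfolding e0_def using eps by simp
  have "exp e0 \<le> 1 + e0 + e0\<^sup>2" by (rule exp_bound[OF e00 e01])
  moreover have "e0\<^sup>2 \<le> e0" using e00 e01 by (simp add: power2_eq_square mult_left_le_one_le)
  ultimately have ex: "exp e0 - 1 \<le> 2 * e0" by linarith
  have t0: "t \<ge> 0" unfolding t_def using L0 eps by simp
  have "real r * (t * e0 * (exp e0 - 1)) \<le> real r * (t * e0 * (2 * e0))"
    using ex t0 e00 rr by (intro mult_left_mono) (auto intro: mult_nonneg_nonneg)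
  also have "\<dots> = 2 * t * (real r * e0\<^sup>2)" by (simp add: power2_eq_square algebra_simps)
  also have "real r * e0\<^sup>2 = eps\<^sup>2 / (8 * L)" unfolding e0sq using rr by (simp add: field_simps)
  also have "2 * t * (eps\<^sup>2 / (8 * L)) = eps" unfolding t_def using L0 eps by (simp add: field_simps power2_eq_square)
  finally have a1: "real r * (t * e0 * (exp e0 - 1)) \<le> eps" .
  have a2: "real r * (t\<^sup>2 * e0\<^sup>2 / 2) = L"
    unfolding e0sq t_def using L0 eps rr by (simp add: field_simps power2_eq_square)
  have a3: "t * eps = 4 * L" unfolding t_def using eps by simp
  have "- t * eps + real r * (t * e0 * (exp e0 - 1) + t\<^sup>2 * e0\<^sup>2 / 2) \<le> - L"
    using a1 a2 a3 L0 eps by (simp add: distrib_left)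
  hence "exp (- t * eps) * exp (real r * (t * e0 * (exp e0 - 1) + t\<^sup>2 * e0\<^sup>2 / 2)) \<le> exp (- L)"
    by (simp add: exp_add[symmetric])
  also have "exp (- L) = del / 2" unfolding L_def using del by (simp add: exp_minus)
  finally have b: "exp (- t * eps) * exp (real r * (t * e0 * (exp e0 - 1) + t\<^sup>2 * e0\<^sup>2 / 2)) \<le> del / 2" .
  have "real r * d0 = del / 2" unfolding d0_def using rr by simp
  then show ?thesis using b by simp
qed

lemma realsum_bind: "realsum_shuffled n lam r X = bind_pmf (list_pmf (map (encoder r) X)) (Out n lam)"
proof -
  have "list_pmf (map (realsum_user n lam r) X) =
        bind_pmf (list_pmf (map (encoder r) X)) (\<lambda>ws. list_pmf (map2 (\<lambda>x bs. list_pmf (map (bit_rand n lam) bs)) X ws))"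
    unfolding realsum_user_def by (rule list_pmf_bind)
  also have "\<dots> = bind_pmf (list_pmf (map (encoder r) X)) (\<lambda>ws. list_pmf (map (\<lambda>bs. list_pmf (map (bit_rand n lam) bs)) ws))"
  proof (intro bind_pmf_cong refl)
    fix ws assume "ws \<in> set_pmf (list_pmf (map (encoder r) X))"
    then have "length ws = length X" by (auto dest: length_in_set_list_pmf)
    then show "list_pmf (map2 (\<lambda>x bs. list_pmf (map (bit_rand n lam) bs)) X ws) = list_pmf (map (\<lambda>bs. list_pmf (map (bit_rand n lam) bs)) ws)"
      by (intro arg_cong[where f=list_pmf] nth_equalityI) auto
  qed
  finally show ?thesis unfolding realsum_shuffled_def Out_def by (simp add: map_bind_pmf)
qed

lemma encoder_len: "bs \<in> set_pmf (encoder r x) \<Longrightarrow> length bs = r"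
  unfolding encoder_def Let_def by (auto dest: length_in_set_list_pmf)

lemma finite_bitsum: "finite (set_pmf (bitsum_shuffled n lam c))"
proof -
  have "finite (set_pmf (list_pmf (map (bit_rand n lam) c)))"
    unfolding set_list_pmf by (rule finite_lsets) auto
  then show ?thesis unfolding bitsum_shuffled_def by simp
qed

lemma out_indist:
  assumes dpb: "dp e0 d0 n UNIV (bitsum_shuffled n lam)" and e0: "e0 \<ge> 0" and t: "t \<ge> 0"
    and l: "length bss = n" "length bss' = n"
    and rows: "\<And>bs. bs \<in> set bss \<Longrightarrow> length bs = r" "\<And>bs. bs \<in> set bss' \<Longrightarrow> length bs = r"
    and card: "card {i. i < n \<and> bss ! i \<noteq> bss' ! i} \<le> 1"
  shows "indist e (real r * d0 + exp (- t * e) * exp (real r * (t * e0 * (exp e0 - 1) + t\<^sup>2 * e0\<^sup>2 / 2)))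
           (Out n lam bss) (Out n lam bss')"
proof -
  define Ps where "Ps = map (\<lambda>j. bitsum_shuffled n lam (map (\<lambda>bs. bs ! j) bss)) [0..<r]"
  define Qs where "Qs = map (\<lambda>j. bitsum_shuffled n lam (map (\<lambda>bs. bs ! j) bss')) [0..<r]"
  have "indist e (real (length Ps) * d0 + exp (- t * e) * exp (real (length Ps) * (t * e0 * (exp e0 - 1) + t\<^sup>2 * e0\<^sup>2 / 2)))
           (list_pmf Ps) (list_pmf Qs)"
  proof (rule composition[OF _ _ _ e0 t])
    show "length Qs = length Ps" by (simp add: Ps_def Qs_def)
    show "finite (set_pmf (Ps ! j)) \<and> finite (set_pmf (Qs ! j))" if "j < length Ps" for j
      using that by (simp add: Ps_def Qs_def finite_bitsum)
    show "indist e0 d0 (Ps ! j) (Qs ! j) \<and> indist e0 d0 (Qs ! j) (Ps ! j)" if "j < length Ps" for j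
    proof -
      have j: "j < r" using that by (simp add: Ps_def)
      define c where "c = map (\<lambda>bs. bs ! j) bss"
      define c' where "c' = map (\<lambda>bs. bs ! j) bss'"
      have lc: "length c = n" "length c' = n" using l by (auto simp: c_def c'_def)
      have sub1: "{i. i < n \<and> c ! i \<noteq> c' ! i} \<subseteq> {i. i < n \<and> bss ! i \<noteq> bss' ! i}"
        using l by (auto simp: c_def c'_def)
      have sub2: "{i. i < n \<and> c' ! i \<noteq> c ! i} \<subseteq> {i. i < n \<and> bss ! i \<noteq> bss' ! i}"
        using l by (auto simp: c_def c'_def)
      have c1: "card {i. i < n \<and> c ! i \<noteq> c' ! i} \<le> 1"
      proof -
        have "finite {i. i < n \<and> bss ! i \<noteq> bss' ! i}" by simp
        from card_mono[OF this sub1] card show ?thesis by linarith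
      qed
      have c2: "card {i. i < n \<and> c' ! i \<noteq> c ! i} \<le> 1"
      proof -
        have "finite {i. i < n \<and> bss ! i \<noteq> bss' ! i}" by simp
        from card_mono[OF this sub2] card show ?thesis by linarith
      qed
      have "indist e0 d0 (bitsum_shuffled n lam c) (bitsum_shuffled n lam c')"
        using dpb lc c1 unfolding dp_def indist_def by blast
      moreover have "indist e0 d0 (bitsum_shuffled n lam c') (bitsum_shuffled n lam c)"
        using dpb lc c2 unfolding dp_def indist_def by blast
      ultimately show ?thesis using j by (simp add: Ps_def Qs_def c_def c'_def)
    qed
  qed
  hence "indist e (real r * d0 + exp (- t * e) * exp (real r * (t * e0 * (exp e0 - 1) + t\<^sup>2 * e0\<^sup>2 / 2)))
           (map_pmf sum_list (list_pmf Ps)) (map_pmf sum_list (list_pmf Qs))"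
    by (intro indist_map) (simp add: Ps_def)
  moreover have "Out n lam bss = map_pmf sum_list (list_pmf Ps)"
    unfolding Ps_def by (subst Out_Col[OF rows(1)]) (auto simp: Col_def)
  moreover have "Out n lam bss' = map_pmf sum_list (list_pmf Qs)"
    unfolding Qs_def by (subst Out_Col[OF rows(2)]) (auto simp: Col_def)
  ultimately show ?thesis by simp
qed

lemma realsum_dp_given:
  fixes eps del lam :: real and n r :: nat
  assumes eps: "0 < eps" "eps < 1" and del: "0 < del" "del < 1" and r: "r > 0"
    and dpb: "dp (eps / sqrt (8 * real r * ln (2 / del))) (del / (2 * real r)) n UNIV (bitsum_shuffled n lam)"
  shows "dp eps del n {0..1} (realsum_shuffled n lam r)"
  unfolding dp_def
proof (intro allI impI)
  fix X X' :: "real list" and T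
  assume lX: "length X = n" and lX': "length X' = n" and "set X \<subseteq> {0..1}" "set X' \<subseteq> {0..1}"
    and card: "card {i. i < n \<and> X ! i \<noteq> X' ! i} \<le> 1"
  define L where "L = ln (2 / del)"
  define e0 where "e0 = eps / sqrt (8 * real r * L)"
  define d0 where "d0 = del / (2 * real r)"
  define t where "t = 4 * L / eps"
  have L0: "L \<ge> 0" unfolding L_def using del by (simp add: ln_ge_zero_iff field_simps)
  have e0: "e0 \<ge> 0" unfolding e0_def using eps L0 by (intro divide_nonneg_nonneg) auto
  have t0: "t \<ge> 0" unfolding t_def using L0 eps by simp
  have bound: "real r * d0 + exp (- t * eps) * exp (real r * (t * e0 * (exp e0 - 1) + t\<^sup>2 * e0\<^sup>2 / 2)) \<le> del"
    unfolding L_def e0_def d0_def t_def by (rule arith_bound[OF eps del r])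
  define E where "E = encoder r"
  define Zs where "Zs = map2 (\<lambda>x x'. if x = x' then map_pmf (\<lambda>a. (a, a)) (E x) else pair_pmf (E x) (E x')) X X'"
  define \<pi> where "\<pi> = map_pmf (\<lambda>zs. (map fst zs, map snd zs)) (list_pmf Zs)"
  have lZ: "length Zs = n" using lX lX' by (simp add: Zs_def)
  have Zi: "Zs ! i = (if X ! i = X' ! i then map_pmf (\<lambda>a. (a, a)) (E (X ! i)) else pair_pmf (E (X ! i)) (E (X' ! i)))"
    if "i < n" for i using that lX lX' by (simp add: Zs_def)
  have fst\<pi>: "map_pmf fst \<pi> = list_pmf (map E X)"
  proof -
    have "map_pmf fst \<pi> = list_pmf (map (map_pmf fst) Zs)"
      by (simp add: \<pi>_def pmf.map_comp comp_def list_pmf_map_pmf)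
    also have "map (map_pmf fst) Zs = map E X"
      by (rule nth_equalityI) (auto simp: lZ lX Zi pmf.map_comp comp_def map_fst_pair_pmf)
    finally show ?thesis .
  qed
  have snd\<pi>: "map_pmf snd \<pi> = list_pmf (map E X')"
  proof -
    have "map_pmf snd \<pi> = list_pmf (map (map_pmf snd) Zs)"
      by (simp add: \<pi>_def pmf.map_comp comp_def list_pmf_map_pmf)
    also have "map (map_pmf snd) Zs = map E X'"
      by (rule nth_equalityI) (auto simp: lZ lX' Zi pmf.map_comp comp_def map_snd_pair_pmf)
    finally show ?thesis .
  qed
  have "indist eps (real r * d0 + exp (- t * eps) * exp (real r * (t * e0 * (exp e0 - 1) + t\<^sup>2 * e0\<^sup>2 / 2)))
          (bind_pmf (map_pmf fst \<pi>) (Out n lam)) (bind_pmf (map_pmf snd \<pi>) (Out n lam))"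
  proof (rule indist_bind_coupling)
    fix z assume "z \<in> set_pmf \<pi>"
    then obtain zs where zs: "zs \<in> set_pmf (list_pmf Zs)" and z: "z = (map fst zs, map snd zs)"
      by (auto simp: \<pi>_def)
    have lzs: "length zs = n" using length_in_set_list_pmf[OF zs] lZ by simp
    have zi: "zs ! i \<in> set_pmf (Zs ! i)" if "i < n" for i using nth_in_set_list_pmf[OF zs] that lZ by simp
    have props: "length (fst (zs ! i)) = r \<and> length (snd (zs ! i)) = r \<and> (X ! i = X' ! i \<longrightarrow> fst (zs ! i) = snd (zs ! i))"
      if "i < n" for i
      using zi[OF that] Zi[OF that] by (cases "X ! i = X' ! i") (auto simp: E_def encoder_len)
    show "indist eps (real r * d0 + exp (- t * eps) * exp (real r * (t * e0 * (exp e0 - 1) + t\<^sup>2 * e0\<^sup>2 / 2)))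
          (Out n lam (fst z)) (Out n lam (snd z))"
      unfolding z fst_conv snd_conv
    proof (rule out_indist[OF _ e0 t0])
      show "dp e0 d0 n UNIV (bitsum_shuffled n lam)" using dpb by (simp add: e0_def d0_def L_def)
      show "length (map fst zs) = n" "length (map snd zs) = n" using lzs by auto
      show "length bs = r" if "bs \<in> set (map fst zs)" for bs
      proof -
        from that obtain i where i: "i < length zs" "bs = fst (zs ! i)" by (auto simp: in_set_conv_nth)
        then show ?thesis using props[of i] lzs by simp
      qed
      show "length bs = r" if "bs \<in> set (map snd zs)" for bs
      proof -
        from that obtain i where i: "i < length zs" "bs = snd (zs ! i)" by (auto simp: in_set_conv_nth)
        then show ?thesis using props[of i] lzs by simp
      qed
      have "{i. i < n \<and> map fst zs ! i \<noteq> map snd zs ! i} \<subseteq> {i. i < n \<and> X ! i \<noteq> X' ! i}"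
        using props lzs by auto
      from card_mono[OF _ this] card
      show "card {i. i < n \<and> map fst zs ! i \<noteq> map snd zs ! i} \<le> 1" by simp
    qed
  qed
  hence "indist eps del (realsum_shuffled n lam r X) (realsum_shuffled n lam r X')"
    unfolding realsum_bind fst\<pi> snd\<pi> E_def by (rule indist_mono_d[OF _ bound])
  then show "measure_pmf.prob (realsum_shuffled n lam r X) T \<le> exp eps * measure_pmf.prob (realsum_shuffled n lam r X') T + del"
    by (simp add: indist_def)
qed

definition Wd :: "real \<Rightarrow> bool option pmf" where
  "Wd \<rho> = bind_pmf (bernoulli_pmf \<rho>) (\<lambda>c. if c then map_pmf Some (bernoulli_pmf (1/2)) else return_pmf None)"

definition hh :: "bool option \<Rightarrow> bool \<Rightarrow> bool" where
  "hh w b = (case w of None \<Rightarrow> b | Some u \<Rightarrow> u)"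

lemma pmf_bind_bern:
  "0 \<le> p \<Longrightarrow> p \<le> 1 \<Longrightarrow> pmf (bind_pmf (bernoulli_pmf p) f) x = p * pmf (f True) x + (1 - p) * pmf (f False) x"
  by (simp add: pmf_bind)

lemma pmf_half: "pmf (bernoulli_pmf (1/2)) x = 1/2"
  by (cases x) auto

lemma pmf_bit_rand:
  assumes "0 \<le> l" "l \<le> real n" "n > 0"
  shows "pmf (bit_rand n l b) x = l / n / 2 + (1 - l / n) * (if x = b then 1 else 0)"
  using assms unfolding bit_rand_def by (simp add: pmf_bind_bern pmf_half)

lemma bit_rand_repr:
  assumes s: "0 \<le> s" "s \<le> real n" and n: "n > 0" and rho: "0 \<le> \<rho>" "\<rho> \<le> 1"
  shows "bit_rand n (s + \<rho> * (real n - s)) b = bind_pmf (Wd \<rho>) (\<lambda>w. bit_rand n s (hh w b))"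
proof (rule pmf_eqI)
  fix x
  have l: "0 \<le> s + \<rho> * (real n - s)" "s + \<rho> * (real n - s) \<le> real n"
  proof -
    show "0 \<le> s + \<rho> * (real n - s)" using s rho by simp
    have "\<rho> * (real n - s) \<le> 1 * (real n - s)" using s rho by (intro mult_right_mono) auto
    then show "s + \<rho> * (real n - s) \<le> real n" by simp
  qed
  have "pmf (bind_pmf (Wd \<rho>) (\<lambda>w. bit_rand n s (hh w b))) x =
        \<rho> * (1/2 * pmf (bit_rand n s True) x + 1/2 * pmf (bit_rand n s False) x) + (1 - \<rho>) * pmf (bit_rand n s b) x"
    unfolding Wd_def using rho
    by (simp add: bind_assoc_pmf bind_return_pmf bind_map_pmf pmf_bind_bern hh_def)
  also have "\<dots> = (s + \<rho> * (real n - s)) / n / 2 + (1 - (s + \<rho> * (real n - s)) / n) * (if x = b then 1 else 0)"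
    using s n by (cases x; cases b) (simp_all add: pmf_bit_rand field_simps)
  also have "\<dots> = pmf (bit_rand n (s + \<rho> * (real n - s)) b) x"
    using l n by (simp add: pmf_bit_rand)
  finally show "pmf (bit_rand n (s + \<rho> * (real n - s)) b) x = pmf (bind_pmf (Wd \<rho>) (\<lambda>w. bit_rand n s (hh w b))) x" by simp
qed

lemma bitsum_repr:
  assumes s: "0 \<le> s" "s \<le> real n" and n: "n > 0" and rho: "0 \<le> \<rho>" "\<rho> \<le> 1"
  shows "bitsum_shuffled n (s + \<rho> * (real n - s)) X =
     bind_pmf (list_pmf (replicate (length X) (Wd \<rho>))) (\<lambda>ws. bitsum_shuffled n s (map2 (\<lambda>b w. hh w b) X ws))"
proof -
  have "map (bit_rand n (s + \<rho> * (real n - s))) X = map (\<lambda>b. bind_pmf (Wd \<rho>) (\<lambda>w. bit_rand n s (hh w b))) X"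
    using bit_rand_repr[OF s n rho] by simp
  also have "list_pmf \<dots> = bind_pmf (list_pmf (map (\<lambda>_. Wd \<rho>) X)) (\<lambda>ws. list_pmf (map2 (\<lambda>b w. bit_rand n s (hh w b)) X ws))"
    by (rule list_pmf_bind)
  finally show ?thesis
    unfolding bitsum_shuffled_def by (simp add: map_bind_pmf map_replicate_const case_prod_beta comp_def)
qed

lemma pmf_Wd_None: "0 \<le> \<rho> \<Longrightarrow> \<rho> \<le> 1 \<Longrightarrow> pmf (Wd \<rho>) None = 1 - \<rho>"
  unfolding Wd_def by (simp add: pmf_bind_bern pmf_eq_0_set_pmf)

lemma pmf_replicate: "pmf (list_pmf (replicate n p)) (replicate n x) = pmf p x ^ n"
  unfolding pmf_list_pmf by (induction n) simp_all

lemma map2_hh_None: "length X = n \<Longrightarrow> map2 (\<lambda>b w. hh w b) X (replicate n None) = X"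
  by (rule nth_equalityI) (auto simp: hh_def)

lemma prob_bind_lower: "pmf p w0 * measure_pmf.prob (F w0) T \<le> measure_pmf.prob (bind_pmf p F) T"
proof -
  have "pmf p w0 * measure_pmf.prob (F w0) T = measure_pmf.expectation p (\<lambda>x. indicator {w0} x * measure_pmf.prob (F w0) T)"
    by (simp add: measure_pmf_single)
  also have "\<dots> \<le> measure_pmf.expectation p (\<lambda>x. measure_pmf.prob (F x) T)"
    by (intro integral_mono measure_pmf.integrable_const_bound[where B=1]) (auto simp: indicator_def)
  also have "\<dots> = measure_pmf.prob (bind_pmf p F) T" by (simp add: prob_bind_pmf)
  finally show ?thesis .
qed

lemma prob_bind_upper: "measure_pmf.prob (bind_pmf p F) T \<le> pmf p w0 * measure_pmf.prob (F w0) T + (1 - pmf p w0)"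
proof -
  have "pmf p w0 * measure_pmf.prob (F w0) (- T) \<le> measure_pmf.prob (bind_pmf p F) (- T)"
    by (rule prob_bind_lower)
  moreover have "measure_pmf.prob (F w0) (- T) = 1 - measure_pmf.prob (F w0) T"
    using measure_pmf.prob_compl[of T "F w0"] by (simp add: Compl_eq_Diff_UNIV)
  moreover have "measure_pmf.prob (bind_pmf p F) (- T) = 1 - measure_pmf.prob (bind_pmf p F) T"
    using measure_pmf.prob_compl[of T "bind_pmf p F"] by (simp add: Compl_eq_Diff_UNIV)
  ultimately show ?thesis by (simp add: algebra_simps)
qed

lemma card_map2_hh:
  assumes "length X = n" "length X' = n" "length ws = n"
  shows "card {i. i < n \<and> map2 (\<lambda>b w. hh w b) X ws ! i \<noteq> map2 (\<lambda>b w. hh w b) X' ws ! i} \<le> card {i. i < n \<and> X ! i \<noteq> X' ! i}"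
  by (rule card_mono) (use assms in \<open>auto simp: hh_def split: option.splits\<close>)

lemma dp_mono:
  assumes dps: "dp e d n UNIV (bitsum_shuffled n s)" and sl: "0 \<le> s" "s \<le> l" "l \<le> real n"
  shows "dp e d n UNIV (bitsum_shuffled n l)"
proof (cases "s = real n")
  case True
  then have "l = s" using sl by simp
  then show ?thesis using dps by simp
next
  case False
  hence sn: "s < real n" using sl by simp
  hence n: "n > 0" using sl by simp
  define \<rho> where "\<rho> = (l - s) / (real n - s)"
  have rho: "0 \<le> \<rho>" "\<rho> \<le> 1" using sl sn by (auto simp: \<rho>_def divide_le_eq_1)
  have l: "l = s + \<rho> * (real n - s)" using sn by (simp add: \<rho>_def)
  show ?thesis
    unfolding dp_def
  proof (intro allI impI)
    fix X X' :: "bool list" and T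
    assume lX: "length X = n" and lX': "length X' = n" and "set X \<subseteq> UNIV" "set X' \<subseteq> UNIV"
      and card: "card {i. i < n \<and> X ! i \<noteq> X' ! i} \<le> 1"
    define Wn where "Wn = list_pmf (replicate n (Wd \<rho>))"
    define \<pi> where "\<pi> = map_pmf (\<lambda>ws. (ws, ws)) Wn"
    have "indist e d (bind_pmf (map_pmf fst \<pi>) (\<lambda>ws. bitsum_shuffled n s (map2 (\<lambda>b w. hh w b) X ws)))
                     (bind_pmf (map_pmf snd \<pi>) (\<lambda>ws. bitsum_shuffled n s (map2 (\<lambda>b w. hh w b) X' ws)))"
    proof (rule indist_bind_coupling)
      fix z assume "z \<in> set_pmf \<pi>"
      then obtain ws where ws: "ws \<in> set_pmf Wn" "z = (ws, ws)" by (auto simp: \<pi>_def)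
      have lws: "length ws = n" using length_in_set_list_pmf[OF ws(1)[unfolded Wn_def]] by simp
      have c: "card {i. i < n \<and> map2 (\<lambda>b w. hh w b) X ws ! i \<noteq> map2 (\<lambda>b w. hh w b) X' ws ! i} \<le> 1"
        using card_map2_hh[OF lX lX' lws] card by linarith
      show "indist e d (bitsum_shuffled n s (map2 (\<lambda>b w. hh w b) X (fst z))) (bitsum_shuffled n s (map2 (\<lambda>b w. hh w b) X' (snd z)))"
        using dps c lX lX' lws ws(2) unfolding dp_def indist_def by simp
    qed
    hence "indist e d (bitsum_shuffled n l X) (bitsum_shuffled n l X')"
      unfolding l bitsum_repr[OF sl(1) less_imp_le[OF sn] n rho] lX lX' \<pi>_def Wn_def
      by (simp add: pmf.map_comp comp_def)
    then show "measure_pmf.prob (bitsum_shuffled n l X) T \<le> exp e * measure_pmf.prob (bitsum_shuffled n l X') T + d"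
      by (simp add: indist_def)
  qed
qed

lemma dp_closure:
  assumes s: "0 \<le> s" "s < real n" and e: "e \<ge> 0"
    and all: "\<And>l. s < l \<Longrightarrow> l \<le> real n \<Longrightarrow> dp e d n UNIV (bitsum_shuffled n l)"
  shows "dp e d n UNIV (bitsum_shuffled n s)"
  unfolding dp_def
proof (intro allI impI)
  fix X X' :: "bool list" and T
  assume lX: "length X = n" and lX': "length X' = n" and su: "set X \<subseteq> UNIV" "set X' \<subseteq> UNIV"
    and card: "card {i. i < n \<and> X ! i \<noteq> X' ! i} \<le> 1"
  have n: "n > 0" using s by simp
  define p where "p = measure_pmf.prob (bitsum_shuffled n s X) T"
  define p' where "p' = measure_pmf.prob (bitsum_shuffled n s X') T"
  show "p \<le> exp e * p' + d" unfolding p_def[symmetric] p'_def[symmetric]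
  proof (rule ccontr)
    assume "\<not> p \<le> exp e * p' + d"
    hence g: "p - exp e * p' - d > 0" by simp
    define g where "g = p - exp e * p' - d"
    define \<rho> where "\<rho> = min 1 (g / (2 * real n * (1 + exp e)))"
    have "0 < real n * (1 + exp e)" using n by (intro mult_pos_pos add_pos_pos) auto
    hence rpos: "\<rho> > 0" using g n by (auto simp: \<rho>_def g_def intro!: divide_pos_pos)
    have r1: "\<rho> \<le> 1" by (simp add: \<rho>_def)
    have rg: "\<rho> * (real n * (1 + exp e)) \<le> g / 2"
    proof -
      have "\<rho> \<le> g / (2 * real n * (1 + exp e))" by (simp add: \<rho>_def)
      hence "\<rho> * (real n * (1 + exp e)) \<le> g / (2 * real n * (1 + exp e)) * (real n * (1 + exp e))"
        by (intro mult_right_mono) auto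
      also have "\<dots> = g / 2" using \<open>0 < real n * (1 + exp e)\<close> by (simp add: field_simps)
      finally show ?thesis .
    qed
    define l where "l = s + \<rho> * (real n - s)"
    have sl: "s < l" using rpos s by (simp add: l_def)
    have ln: "l \<le> real n"
    proof -
      have "\<rho> * (real n - s) \<le> 1 * (real n - s)" using s r1 by (intro mult_right_mono) auto
      then show ?thesis by (simp add: l_def)
    qed
    define Wn where "Wn = list_pmf (replicate n (Wd \<rho>))"
    define a where "a = pmf Wn (replicate n None)"
    have a: "a = (1 - \<rho>) ^ n" unfolding a_def Wn_def pmf_replicate using rpos r1 by (simp add: pmf_Wd_None)
    have a1: "a \<le> 1" "0 \<le> a" using rpos r1 a by (auto intro: power_le_one)
    have a2: "1 - real n * \<rho> \<le> a"
      using Bernoulli_inequality[of "- \<rho>" n] r1 a by simp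
    have repX: "bitsum_shuffled n l X = bind_pmf Wn (\<lambda>ws. bitsum_shuffled n s (map2 (\<lambda>b w. hh w b) X ws))"
      unfolding l_def Wn_def using bitsum_repr[OF s(1) less_imp_le[OF s(2)] n less_imp_le[OF rpos] r1, of X] lX by simp
    have repX': "bitsum_shuffled n l X' = bind_pmf Wn (\<lambda>ws. bitsum_shuffled n s (map2 (\<lambda>b w. hh w b) X' ws))"
      unfolding l_def Wn_def using bitsum_repr[OF s(1) less_imp_le[OF s(2)] n less_imp_le[OF rpos] r1, of X'] lX' by simp
    have low: "a * p \<le> measure_pmf.prob (bitsum_shuffled n l X) T"
      unfolding repX a_def p_def using prob_bind_lower[of Wn "replicate n None" "\<lambda>ws. bitsum_shuffled n s (map2 (\<lambda>b w. hh w b) X ws)" T]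
      by (simp add: map2_hh_None[OF lX])
    have up: "measure_pmf.prob (bitsum_shuffled n l X') T \<le> a * p' + (1 - a)"
      unfolding repX' a_def p'_def using prob_bind_upper[of Wn "\<lambda>ws. bitsum_shuffled n s (map2 (\<lambda>b w. hh w b) X' ws)" T "replicate n None"]
      by (simp add: map2_hh_None[OF lX'])
    have dpl: "measure_pmf.prob (bitsum_shuffled n l X) T \<le> exp e * measure_pmf.prob (bitsum_shuffled n l X') T + d"
      using all[OF sl ln] lX lX' su card unfolding dp_def by blast
    have "a * p \<le> exp e * (a * p' + (1 - a)) + d"
      using low dpl up by (smt (verit) exp_gt_zero mult_left_mono)
    hence k: "g \<le> (1 - a) * (exp e + p - exp e * p')"
      unfolding g_def by (simp add: algebra_simps)
    have p1: "p \<le> 1" "p' \<ge> 0" by (simp_all add: p_def p'_def)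
    have "exp e + p - exp e * p' \<le> 1 + exp e" using p1 by (smt (verit) exp_gt_zero mult_nonneg_nonneg)
    hence "(1 - a) * (exp e + p - exp e * p') \<le> (1 - a) * (1 + exp e)"
      using a1 by (intro mult_left_mono) auto
    also have "\<dots> \<le> (real n * \<rho>) * (1 + exp e)" using a2 by (intro mult_right_mono) auto
    also have "\<dots> \<le> g / 2" using rg by (simp add: algebra_simps)
    finally show False using k g g_def by simp
  qed
qed

lemma dp_equal:
  fixes M :: "'a list \<Rightarrow> 'b pmf"
  assumes "\<And>X X' :: 'a list. length X = n \<Longrightarrow> length X' = n \<Longrightarrow> M X = M X'" "e \<ge> 0" "d \<ge> 0"
  shows "dp e d n D M"
  unfolding dp_def
proof (intro allI impI)
  fix X X' :: "'a list" and T assume "length X = n" "length X' = n"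
  then have "M X = M X'" using assms(1) by blast
  then show "measure_pmf.prob (M X) T \<le> exp e * measure_pmf.prob (M X') T + d"
    using indist_refl[OF assms(2,3), of "M X'"] by (simp add: indist_def)
qed

lemma bit_rand_full: "n > 0 \<Longrightarrow> bit_rand n (real n) b = bernoulli_pmf (1/2)"
  by (rule pmf_eqI) (simp add: bit_rand_def pmf_bind_bern)

lemma bitsum_full: "n > 0 \<Longrightarrow> bitsum_shuffled n (real n) X = map_pmf mset (list_pmf (replicate (length X) (bernoulli_pmf (1/2))))"
proof -
  assume n: "n > 0"
  have "bit_rand n (real n) = (\<lambda>_. bernoulli_pmf (1/2))" by (rule ext) (rule bit_rand_full[OF n])
  then show ?thesis unfolding bitsum_shuffled_def by (simp add: map_replicate_const)
qed

lemma bit_rand_clamp: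
  assumes "l \<ge> 0"
  shows "bit_rand n l = bit_rand n (min l (real n))"
proof (cases "n = 0")
  case True
  then show ?thesis by (simp add: bit_rand_def fun_eq_iff)
next
  case False
  have eq: "min 1 (max 0 (l / real n)) = min 1 (max 0 (min l (real n) / real n))"
    using False assms by (auto simp: min_def max_def divide_le_eq_1 field_simps)
  have "bernoulli_pmf (l / real n) = bernoulli_pmf (min l (real n) / real n)"
    by (rule pmf_eqI) (simp add: bernoulli_pmf.rep_eq eq)
  then show ?thesis by (simp add: bit_rand_def fun_eq_iff)
qed

lemma bitsum_dp_from_star:
  assumes e: "e \<ge> 0" and d: "d \<ge> 0" and lam: "lam \<ge> lambda_star n e d"
  shows "dp e d n UNIV (bitsum_shuffled n lam)"
proof (cases "n = 0")
  case True
  show ?thesis by (rule dp_equal[OF _ e d]) (use True in simp)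
next
  case False
  hence n: "n > 0" by simp
  define S where "S = {lam. 0 \<le> lam \<and> lam \<le> real n \<and> dp e d n UNIV (bitsum_shuffled n lam)}"
  have dpn: "dp e d n UNIV (bitsum_shuffled n (real n))"
    by (rule dp_equal[OF _ e d]) (simp add: bitsum_full[OF n])
  have nS: "real n \<in> S" using dpn by (simp add: S_def)
  have ne: "S \<noteq> {}" using nS by auto
  have bdd: "bdd_below S" by (rule bdd_belowI[of _ 0]) (auto simp: S_def)
  have ls: "lambda_star n e d = Inf S" by (simp add: lambda_star_def S_def)
  have I0: "0 \<le> Inf S" by (rule cInf_greatest[OF ne]) (auto simp: S_def)
  have above: "dp e d n UNIV (bitsum_shuffled n l)" if "Inf S < l" "l \<le> real n" for l
  proof -
    have "\<exists>x\<in>S. x < l" using that(1) cInf_less_iff[OF ne bdd] by blast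
    then obtain x where x: "x \<in> S" "x < l" by blast
    show ?thesis by (rule dp_mono[of e d n x]) (use x that in \<open>auto simp: S_def\<close>)
  qed
  define lamc where "lamc = min lam (real n)"
  have lam0: "lam \<ge> 0" using lam I0 ls by simp
  have lc: "0 \<le> lamc" "lamc \<le> real n" "Inf S \<le> lamc" using lam0 lam ls I0 n cInf_lower[OF nS bdd]
    by (auto simp: lamc_def)
  have dpc: "dp e d n UNIV (bitsum_shuffled n lamc)"
  proof (cases "lamc = real n")
    case True
    then show ?thesis using dpn by simp
  next
    case False
    then have "lamc < real n" using lc by simp
    show ?thesis
      by (rule dp_closure[OF lc(1) \<open>lamc < real n\<close> e]) (use above lc in auto)
  qed
  have "bitsum_shuffled n lam = bitsum_shuffled n lamc"
    unfolding bitsum_shuffled_def lamc_def using bit_rand_clamp[OF lam0, of n] by simp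
  then show ?thesis using dpc by simp
qed

theorem theorem5p4:
  fixes eps del lam :: real and n r :: nat
  assumes "0 < eps" "eps < 1" "0 < del" "del < 1"
    and "lam \<ge> lambda_star n (eps / sqrt (8 * real r * ln (2 / del))) (del / (2 * real r))"
  shows "dp eps del n {0..1} (realsum_shuffled n lam r)"
proof (cases "r = 0")
  case True
  have "realsum_shuffled n lam r X = return_pmf {#}" for X
  proof -
    have "realsum_shuffled n lam r X = bind_pmf (list_pmf (map (encoder r) X)) (\<lambda>_. return_pmf {#})"
      unfolding realsum_bind
    proof (intro bind_pmf_cong refl)
      fix bss assume bss: "bss \<in> set_pmf (list_pmf (map (encoder r) X))"
      have rows: "\<And>bs. bs \<in> set bss \<Longrightarrow> length bs = 0"
      proof -
        fix bs assume "bs \<in> set bss"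
        then obtain i where i: "i < length bss" "bs = bss ! i" by (auto simp: in_set_conv_nth)
        have "length bss = length X" using length_in_set_list_pmf[OF bss] by simp
        then have "bs \<in> set_pmf (encoder r (X ! i))" using nth_in_set_list_pmf[OF bss] i by auto
        then show "length bs = 0" using True encoder_len by blast
      qed
      show "Out n lam bss = return_pmf {#}"
        by (subst Out_Col[OF rows]) (simp_all add: Col_def)
    qed
    then show ?thesis by simp
  qed
  then show ?thesis using assms by (intro dp_equal) auto
next
  case False
  hence r: "r > 0" by simp
  have L0: "0 \<le> ln (2 / del)" using assms by (simp add: ln_ge_zero_iff field_simps)
  have e0: "0 \<le> eps / sqrt (8 * real r * ln (2 / del))" using assms L0 by (intro divide_nonneg_nonneg) auto
  have d0: "0 \<le> del / (2 * real r)" using assms by simp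
  show ?thesis
    by (rule realsum_dp_given[OF assms(1-4) r bitsum_dp_from_star[OF e0 d0 assms(5)]])
qed

end
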